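(* Let $f:\mathbb{R}\to\mathbb{R}$ be such that $f(s)$ and $f'(s)s$ have $\alpha_0$-critical growth at $\pm\infty$ for some $\alpha_0\in(0,\omega)$, and assume: (f1) $f$ is $C^1$, odd, convex on $\mathbb{R}^+$, and $\lim_{s\to0}f(s)/s=0$; (f2) $s\mapsto s^{-1}f(s)$ is increasing for $s>0$; (f3) there are $q>2$, $C_q>0$ with $F(s)\ge C_q|s|^q$ for all $s$, where $F(s)=\int_0^sf(\sigma)d\sigma$; (AR) there is $\theta>2$ with $\theta F(s)\le sf(s)$ for all $s$. Then there is $\rho_0>0$ such that for every sequence $(u_n)\subset H^{1/2}(\mathbb{R})$ with $u_n\rightharpoonup u$ weakly in $H^{1/2}(\mathbb{R})$ and $\|u_n\|<\rho_0$ for all $n$, as $n\to\infty$, $$\int_{\mathbb{R}}f(u_n)u_n\,dx=\int_{\mathbb{R}}f(u_n-u)(u_n-u)\,dx+\int_{\mathbb{R}}f(u)u\,dx+o(1),$$ $$\int_{\mathbb{R}}F(u_n)\,dx=\int_{\mathbb{R}}F(u_n-u)\,dx+\int_{\mathbb{R}}F(u)\,dx+o(1).$$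
   Context: $H^{1/2}(\mathbb{R})=\{u\in L^2(\mathbb{R}):\int_{\mathbb{R}^2}\frac{(u(x)-u(y))^2}{|x-y|^2}dx\,dy<\infty\}$ with norm $\|u\|^2=\|u\|_{L^2}^2+\int_{\mathbb{R}^2}\frac{(u(x)-u(y))^2}{|x-y|^2}dx\,dy$. The constant $\omega\in(0,\pi]$ is one for which Ozawa's inequality holds: for every $\alpha\in(0,\omega)$ there is $H_\alpha>0$ with $\int_{\mathbb{R}}(e^{\alpha u^2}-1)dx\le H_\alpha\|u\|_{L^2}^2$ whenever $\frac{1}{2\pi}\int_{\mathbb{R}^2}\frac{(u(x)-u(y))^2}{|x-y|^2}dxdy\le1$. A function $g$ has $\alpha_0$-critical growth at $\pm\infty$ if $\limsup_{s\to\pm\infty}\frac{g(s)}{e^{\alpha s^2}-1}=0$ for all $\alpha>\alpha_0$ and $=\pm\infty$ for all $\alpha<\alpha_0$. *)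

theory Defs
  imports "HOL-Analysis.Analysis"
begin

text \<open>Gagliardo seminorm (squared): the double integral over R^2, as an extended
  nonnegative real (the diagonal x = y is a null set).\<close>
definition gagliardo :: "(real \<Rightarrow> real) \<Rightarrow> ennreal" where
  "gagliardo u = (\<integral>\<^sup>+ z. ennreal ((u (fst z) - u (snd z))^2 / (fst z - snd z)^2) \<partial>(lborel \<Otimes>\<^sub>M lborel))"

definition H12 :: "(real \<Rightarrow> real) set" where
  "H12 = {u. u \<in> borel_measurable lborel \<and> integrable lborel (\<lambda>x. (u x)^2) \<and> gagliardo u < \<infinity>}"

definition H12_norm :: "(real \<Rightarrow> real) \<Rightarrow> real" where
  "H12_norm u = sqrt ((\<integral>x. (u x)^2 \<partial>lborel) + enn2real (gagliardo u))"

definition H12_dual :: "((real \<Rightarrow> real) \<Rightarrow> real) set" where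
  "H12_dual = {L. (\<forall>v\<in>H12. \<forall>w\<in>H12. \<forall>a b::real. L (\<lambda>x. a * v x + b * w x) = a * L v + b * L w)
                 \<and> (\<exists>C. \<forall>v\<in>H12. \<bar>L v\<bar> \<le> C * H12_norm v)}"

definition H12_weak_conv :: "(nat \<Rightarrow> real \<Rightarrow> real) \<Rightarrow> (real \<Rightarrow> real) \<Rightarrow> bool" where
  "H12_weak_conv un u \<longleftrightarrow> (\<forall>n. un n \<in> H12) \<and> u \<in> H12 \<and>
     (\<forall>L\<in>H12_dual. (\<lambda>n. L (un n)) \<longlonglongrightarrow> L u)"

definition ozawa_const :: "real \<Rightarrow> bool" where
  "ozawa_const \<omega> \<longleftrightarrow> 0 < \<omega> \<and> \<omega> \<le> pi \<and>
     (\<forall>\<alpha>. 0 < \<alpha> \<and> \<alpha> < \<omega> \<longrightarrow> (\<exists>H>0. \<forall>u\<in>H12.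
        enn2real (gagliardo u) / (2 * pi) \<le> 1 \<longrightarrow>
        (\<integral>\<^sup>+ x. ennreal (exp (\<alpha> * (u x)^2) - 1) \<partial>lborel) \<le> ennreal (H * (\<integral>x. (u x)^2 \<partial>lborel))))"

definition critical_growth :: "real \<Rightarrow> (real \<Rightarrow> real) \<Rightarrow> bool" where
  "critical_growth \<alpha>0 g \<longleftrightarrow>
     (\<forall>\<alpha>>\<alpha>0. Limsup at_top (\<lambda>s. ereal (g s / (exp (\<alpha> * s^2) - 1))) = 0 \<and>
               Limsup at_bot (\<lambda>s. ereal (g s / (exp (\<alpha> * s^2) - 1))) = 0) \<and>
     (\<forall>\<alpha>. 0 < \<alpha> \<and> \<alpha> < \<alpha>0 \<longrightarrow>
               Limsup at_top (\<lambda>s. ereal (g s / (exp (\<alpha> * s^2) - 1))) = \<infinity> \<and>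
               Limsup at_bot (\<lambda>s. ereal (g s / (exp (\<alpha> * s^2) - 1))) = -\<infinity>)"

definition prim :: "(real \<Rightarrow> real) \<Rightarrow> real \<Rightarrow> real" where
  "prim f s = (if 0 \<le> s then integral {0..s} f else - integral {s..0} f)"

end

theory Submission
  imports Defs "HOL-Probability.Distributions"
begin


definition EE :: "real \<Rightarrow> real \<Rightarrow> real" where
  "EE k s = exp (k * s\<^sup>2) - 1"

lemma EE_nonneg: "0 \<le> k \<Longrightarrow> 0 \<le> EE k s"
  unfolding EE_def by simp

lemma EE_ge: "k * s\<^sup>2 \<le> EE k s"
  unfolding EE_def using exp_ge_add_one_self[of "k * s\<^sup>2"] by linarith

lemma EE_mono: "0 \<le> k \<Longrightarrow> s\<^sup>2 \<le> t\<^sup>2 \<Longrightarrow> EE k s \<le> EE k t"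
  unfolding EE_def by (simp add: mult_left_mono)

lemma EE_mono_k: "k \<le> k' \<Longrightarrow> EE k s \<le> EE k' s"
  unfolding EE_def by (simp add: mult_right_mono)

lemma EE_sq: "0 \<le> k \<Longrightarrow> (EE k s)\<^sup>2 \<le> EE (2*k) s"
proof -
  assume k: "0 \<le> k"
  let ?x = "exp (k * s\<^sup>2)"
  have x1: "1 \<le> ?x" by (simp add: k)
  have "exp (2 * k * s\<^sup>2) = ?x * ?x" by (simp add: exp_add[symmetric])
  then show ?thesis unfolding EE_def using x1 by (simp add: power2_eq_square algebra_simps)
qed

lemma EE_sum: "0 \<le> k \<Longrightarrow> EE k (\<bar>a\<bar> + \<bar>b\<bar>) \<le> EE (4*k) a + EE (4*k) b"
proof -
  assume k: "0 \<le> k"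
  have "(\<bar>a\<bar> + \<bar>b\<bar>)\<^sup>2 \<le> 4 * max (a\<^sup>2) (b\<^sup>2)"
  proof (cases "\<bar>a\<bar> \<le> \<bar>b\<bar>")
    case True
    then have "(\<bar>a\<bar> + \<bar>b\<bar>)\<^sup>2 \<le> (2*\<bar>b\<bar>)\<^sup>2" by (intro power_mono) auto
    then show ?thesis by (simp add: power_mult_distrib)
  next
    case False
    then have "(\<bar>a\<bar> + \<bar>b\<bar>)\<^sup>2 \<le> (2*\<bar>a\<bar>)\<^sup>2" by (intro power_mono) auto
    then show ?thesis by (simp add: power_mult_distrib)
  qed
  then have "EE k (\<bar>a\<bar> + \<bar>b\<bar>) \<le> exp (k * (4 * max (a\<^sup>2) (b\<^sup>2))) - 1"
    unfolding EE_def using k by (simp add: mult_left_mono)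
  also have "\<dots> \<le> EE (4*k) a + EE (4*k) b"
    using EE_nonneg[of "4*k" a] EE_nonneg[of "4*k" b] k
    by (cases "a\<^sup>2 \<le> b\<^sup>2") (auto simp: EE_def max_def mult.assoc mult.left_commute)
  finally show ?thesis .
qed

lemma EE_scale: "EE k (c * s) = EE (k * c\<^sup>2) s"
  unfolding EE_def by (simp add: power_mult_distrib mult_ac)


lemma growth_bound:
  fixes g :: "real \<Rightarrow> real"
  assumes cont: "continuous_on UNIV g" and dpos: "\<delta> > 0"
    and near: "\<And>s. \<bar>s\<bar> < \<delta> \<Longrightarrow> \<bar>g s\<bar> \<le> c * \<bar>s\<bar>"
    and bpos: "\<beta> > 0" and far: "\<And>s. S \<le> \<bar>s\<bar> \<Longrightarrow> \<bar>g s\<bar> \<le> EE \<beta> s"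
  shows "\<exists>K\<ge>0. \<forall>s. \<bar>g s\<bar> \<le> K * sqrt (EE (2*\<beta>) s)"
proof -
  have "compact (g ` {-S..S})"
    by (intro compact_continuous_image continuous_on_subset[OF cont]) auto
  then obtain M where M0: "\<forall>s\<in>{-S..S}. \<bar>g s\<bar> \<le> M"
    using compact_imp_bounded[of "g ` {-S..S}"] unfolding bounded_iff by auto
  note M = M0[rule_format]
  define c' where "c' = max 0 (max c (M/\<delta>))"
  have c'0: "0 \<le> c'" unfolding c'_def by simp
  have lin: "\<bar>g s\<bar> \<le> c' * \<bar>s\<bar>" if "\<bar>s\<bar> \<le> S" for s
  proof (cases "\<bar>s\<bar> < \<delta>")
    case True
    then have "\<bar>g s\<bar> \<le> c * \<bar>s\<bar>" by (rule near)
    also have "\<dots> \<le> c' * \<bar>s\<bar>" unfolding c'_def by (intro mult_right_mono) auto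
    finally show ?thesis .
  next
    case False
    have gM: "\<bar>g s\<bar> \<le> M" using M[of s] that by (simp add: abs_le_iff)
    then have M0: "0 \<le> M" by linarith
    have "M = (M/\<delta>) * \<delta>" using dpos by simp
    also have "\<dots> \<le> (M/\<delta>) * \<bar>s\<bar>" using False M0 dpos by (intro mult_left_mono) auto
    also have "\<dots> \<le> c' * \<bar>s\<bar>" unfolding c'_def by (intro mult_right_mono) auto
    finally show ?thesis using gM by linarith
  qed
  have sq: "sqrt (2*\<beta>) * \<bar>s\<bar> \<le> sqrt (EE (2*\<beta>) s)" for s
  proof -
    have "sqrt (2*\<beta>) * \<bar>s\<bar> = sqrt (2 * \<beta> * s\<^sup>2)" by (simp add: real_sqrt_mult)
    also have "\<dots> \<le> sqrt (EE (2*\<beta>) s)" using EE_ge[of "2*\<beta>" s] by simp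
    finally show ?thesis .
  qed
  have far2: "EE \<beta> s \<le> sqrt (EE (2*\<beta>) s)" for s
    using EE_sq[of \<beta> s] bpos by (intro real_le_rsqrt) auto
  define K where "K = max 1 (c' / sqrt (2*\<beta>))"
  have K0: "0 \<le> K" unfolding K_def by simp
  have K1: "1 \<le> K" unfolding K_def by simp
  have sb: "sqrt (2*\<beta>) > 0" using bpos by simp
  have E0: "0 \<le> sqrt (EE (2*\<beta>) s)" for s using EE_nonneg[of "2*\<beta>" s] bpos by simp
  have "\<bar>g s\<bar> \<le> K * sqrt (EE (2*\<beta>) s)" for s
  proof (cases "\<bar>s\<bar> \<le> S")
    case True
    have "\<bar>g s\<bar> \<le> c' * \<bar>s\<bar>" using lin True .
    also have "\<dots> = (c' / sqrt (2*\<beta>)) * (sqrt (2*\<beta>) * \<bar>s\<bar>)" using sb by simp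
    also have "\<dots> \<le> (c' / sqrt (2*\<beta>)) * sqrt (EE (2*\<beta>) s)"
      using sq c'0 sb by (intro mult_left_mono) auto
    also have "\<dots> \<le> K * sqrt (EE (2*\<beta>) s)" unfolding K_def using E0 by (intro mult_right_mono) auto
    finally show ?thesis .
  next
    case False
    then have "\<bar>g s\<bar> \<le> EE \<beta> s" using far by auto
    also have "\<dots> \<le> sqrt (EE (2*\<beta>) s)" by (rule far2)
    also have "\<dots> \<le> K * sqrt (EE (2*\<beta>) s)"
      using E0[of s] mult_right_mono[of 1 K "sqrt (EE (2*\<beta>) s)"] K1 by simp
    finally show ?thesis .
  qed
  then show ?thesis using K0 by blast
qed

lemma mvt_bound:
  fixes j j' :: "real \<Rightarrow> real"
  assumes der: "\<And>s. (j has_real_derivative j' s) (at s)"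
    and bd: "\<And>s. \<bar>j' s\<bar> \<le> K * sqrt (EE \<gamma> s)" and g0: "0 \<le> \<gamma>" and K0: "0 \<le> K"
  shows "\<bar>j (a+b) - j a\<bar> \<le> \<bar>b\<bar> * (K * sqrt (EE \<gamma> (\<bar>a\<bar> + \<bar>b\<bar>)))"
proof -
  have zb: "\<bar>j' z\<bar> \<le> K * sqrt (EE \<gamma> (\<bar>a\<bar> + \<bar>b\<bar>))" if "\<bar>z\<bar> \<le> \<bar>a\<bar> + \<bar>b\<bar>" for z
  proof -
    have "z\<^sup>2 \<le> (\<bar>a\<bar> + \<bar>b\<bar>)\<^sup>2" using that by (metis abs_ge_zero power2_abs power_mono)
    then have "EE \<gamma> z \<le> EE \<gamma> (\<bar>a\<bar> + \<bar>b\<bar>)" using EE_mono g0 by blast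
    then have "sqrt (EE \<gamma> z) \<le> sqrt (EE \<gamma> (\<bar>a\<bar> + \<bar>b\<bar>))" by simp
    then show ?thesis using bd[of z] K0 by (meson mult_left_mono order_trans)
  qed
  consider "b = 0" | "b > 0" | "b < 0" by linarith
  then show ?thesis
  proof cases
    case 1 then show ?thesis by simp
  next
    case 2
    obtain z where z: "a < z" "z < a + b" "j (a+b) - j a = (a + b - a) * j' z"
      using MVT2[of a "a+b" j j'] 2 der by auto
    have "\<bar>z\<bar> \<le> \<bar>a\<bar> + \<bar>b\<bar>" using z 2 by auto
    then show ?thesis using z(3) zb 2 by (simp add: abs_mult mult_left_mono)
  next
    case 3
    obtain z where z: "a + b < z" "z < a" "j a - j (a+b) = (a - (a + b)) * j' z"
      using MVT2[of "a+b" a j j'] 3 der by auto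
    have "\<bar>z\<bar> \<le> \<bar>a\<bar> + \<bar>b\<bar>" using z 3 by auto
    then have "\<bar>j' z\<bar> \<le> K * sqrt (EE \<gamma> (\<bar>a\<bar> + \<bar>b\<bar>))" by (rule zb)
    moreover have "\<bar>j (a+b) - j a\<bar> = \<bar>b\<bar> * \<bar>j' z\<bar>" using z(3) by (simp add: abs_mult abs_minus_commute)
    ultimately show ?thesis by (simp add: mult_left_mono)
  qed
qed

lemma amgm_aux:
  fixes x :: real assumes epos: "0 < \<epsilon>"
  shows "K * \<bar>b\<bar> * x \<le> \<epsilon> * x\<^sup>2 + K\<^sup>2 * b\<^sup>2 / (4 * \<epsilon>)"
proof -
  have "0 \<le> (2 * \<epsilon> * x - K * \<bar>b\<bar>)\<^sup>2" by simp
  then have "4 * \<epsilon> * (K * \<bar>b\<bar> * x) \<le> 4 * \<epsilon> * (\<epsilon> * x\<^sup>2) + K\<^sup>2 * b\<^sup>2"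
    by (simp add: power2_eq_square algebra_simps)
  then show ?thesis using epos by (simp add: field_simps)
qed

lemma diff_bound:
  fixes j j' :: "real \<Rightarrow> real"
  assumes der: "\<And>s. (j has_real_derivative j' s) (at s)"
    and bd: "\<And>s. \<bar>j' s\<bar> \<le> K * sqrt (EE \<gamma> s)" and gpos: "0 < \<gamma>" and K0: "0 \<le> K"
    and epos: "0 < \<epsilon>"
  shows "\<exists>C. \<forall>a b. \<bar>j (a+b) - j a\<bar> \<le> \<epsilon> * EE (4*\<gamma>) a + C * EE (4*\<gamma>) b"
proof -
  define C where "C = K\<^sup>2 / (16 * \<epsilon> * \<gamma>) + K / (2 * sqrt \<gamma>)"
  have "\<bar>j (a+b) - j a\<bar> \<le> \<epsilon> * EE (4*\<gamma>) a + C * EE (4*\<gamma>) b" for a b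
  proof -
    define Ea where "Ea = EE (4*\<gamma>) a"
    define Eb where "Eb = EE (4*\<gamma>) b"
    have Ea0: "0 \<le> Ea" and Eb0: "0 \<le> Eb" unfolding Ea_def Eb_def using EE_nonneg gpos by auto
    have "\<bar>j (a+b) - j a\<bar> \<le> \<bar>b\<bar> * (K * sqrt (EE \<gamma> (\<bar>a\<bar> + \<bar>b\<bar>)))"
      using mvt_bound[OF der bd] gpos K0 by auto
    also have "\<dots> \<le> \<bar>b\<bar> * (K * (sqrt Ea + sqrt Eb))"
    proof -
      have "sqrt (EE \<gamma> (\<bar>a\<bar> + \<bar>b\<bar>)) \<le> sqrt (Ea + Eb)"
        using EE_sum[of \<gamma> a b] gpos unfolding Ea_def Eb_def by simp
      also have "\<dots> \<le> sqrt Ea + sqrt Eb" by (rule sqrt_add_le_add_sqrt[OF Ea0 Eb0])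
      finally show ?thesis using K0 by (intro mult_left_mono) auto
    qed
    also have "\<dots> = K * \<bar>b\<bar> * sqrt Ea + K * \<bar>b\<bar> * sqrt Eb" by (simp add: algebra_simps)
    also have "\<dots> \<le> (\<epsilon> * Ea + K\<^sup>2 / (16 * \<epsilon> * \<gamma>) * Eb) + K / (2 * sqrt \<gamma>) * Eb"
    proof (rule add_mono)
      have bsq: "4 * \<gamma> * b\<^sup>2 \<le> Eb" using EE_ge[of "4*\<gamma>" b] unfolding Eb_def by simp
      have "K * \<bar>b\<bar> * sqrt Ea \<le> \<epsilon> * (sqrt Ea)\<^sup>2 + K\<^sup>2 * b\<^sup>2 / (4 * \<epsilon>)"
        using amgm_aux[OF epos] .
      also have "\<dots> \<le> \<epsilon> * Ea + K\<^sup>2 / (16 * \<epsilon> * \<gamma>) * Eb"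
      proof -
        have "K\<^sup>2 * b\<^sup>2 / (4 * \<epsilon>) = K\<^sup>2 / (16 * \<epsilon> * \<gamma>) * (4 * \<gamma> * b\<^sup>2)"
          using gpos epos by (simp add: field_simps)
        also have "\<dots> \<le> K\<^sup>2 / (16 * \<epsilon> * \<gamma>) * Eb" using bsq gpos epos
          by (intro mult_left_mono) auto
        finally show ?thesis using Ea0 by simp
      qed
      finally show "K * \<bar>b\<bar> * sqrt Ea \<le> \<epsilon> * Ea + K\<^sup>2 / (16 * \<epsilon> * \<gamma>) * Eb" .
      have "2 * sqrt \<gamma> * \<bar>b\<bar> \<le> sqrt Eb"
      proof -
        have "2 * sqrt \<gamma> * \<bar>b\<bar> = sqrt (4 * \<gamma> * b\<^sup>2)"
          by (simp add: real_sqrt_mult real_sqrt_abs[symmetric] del: real_sqrt_abs)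
        also have "\<dots> \<le> sqrt Eb" using bsq by simp
        finally show ?thesis .
      qed
      then have "\<bar>b\<bar> \<le> sqrt Eb / (2 * sqrt \<gamma>)" using gpos by (simp add: field_simps)
      then have "K * \<bar>b\<bar> * sqrt Eb \<le> K * (sqrt Eb / (2 * sqrt \<gamma>)) * sqrt Eb"
        using K0 Eb0 by (intro mult_right_mono mult_left_mono) auto
      also have "\<dots> = K / (2 * sqrt \<gamma>) * Eb" using Eb0 by (simp add: field_simps)
      finally show "K * \<bar>b\<bar> * sqrt Eb \<le> K / (2 * sqrt \<gamma>) * Eb" .
    qed
    also have "\<dots> = \<epsilon> * Ea + C * Eb" unfolding C_def by (simp add: algebra_simps)
    finally show ?thesis unfolding Ea_def Eb_def .
  qed
  then show ?thesis by blast
qed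


lemma crit_far:
  assumes cg: "critical_growth a0 g" and b: "a0 < \<beta>" and a0: "0 < a0"
  shows "\<exists>N. \<forall>s\<ge>N. g s < EE \<beta> s"
proof -
  have "Limsup at_top (\<lambda>s. ereal (g s / (exp (\<beta> * s^2) - 1))) = 0"
    using cg b unfolding critical_growth_def by auto
  then have "eventually (\<lambda>s. ereal (g s / (exp (\<beta> * s^2) - 1)) < 1) at_top"
    by (intro Limsup_lessD) simp
  then obtain N where N: "\<And>s. s \<ge> N \<Longrightarrow> g s / (exp (\<beta> * s^2) - 1) < 1"
    unfolding eventually_at_top_linorder by auto
  have "g s < EE \<beta> s" if "s \<ge> max N 1" for s
  proof -
    have "\<beta> * s^2 > 0" using that b a0 by auto
    then have "exp (\<beta> * s^2) - 1 > 0" by simp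
    then show ?thesis using N[of s] that unfolding EE_def by (simp add: divide_less_eq)
  qed
  then show ?thesis by blast
qed

locale fctx =
  fixes f :: "real \<Rightarrow> real" and \<alpha>0 :: real
  assumes a0: "0 < \<alpha>0"
    and growth_f: "critical_growth \<alpha>0 f"
    and growth_df: "critical_growth \<alpha>0 (\<lambda>s. deriv f s * s)"
    and diffb: "\<forall>s. f differentiable (at s)" and cont_d: "continuous_on UNIV (deriv f)"
    and odd: "\<forall>s. f (- s) = - f s"
    and convex: "convex_on {0..} f"
    and lim0: "((\<lambda>s. f s / s) \<longlongrightarrow> 0) (at 0)"
    and f2: "strict_mono_on {0<..} (\<lambda>s. f s / s)"
begin

lemma f0: "f 0 = 0" using odd by (metis add.inverse_neutral neg_equal_zero)

lemma fder: "(f has_real_derivative deriv f s) (at s)"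
  using diffb DERIV_deriv_iff_real_differentiable by blast

lemma fcont: "continuous_on UNIV f"
  by (meson DERIV_isCont continuous_at_imp_continuous_on fder)

lemma df0: "deriv f 0 = 0"
proof -
  have "((\<lambda>y. (f y - f 0) / (y - 0)) \<longlongrightarrow> deriv f 0) (at 0)"
    using fder[of 0] has_field_derivative_iff by blast
  then have "((\<lambda>y. f y / y) \<longlongrightarrow> deriv f 0) (at 0)" by (simp add: f0)
  then show ?thesis using lim0 tendsto_unique[OF at_neq_bot] by blast
qed

lemma fpos: assumes "0 \<le> s" shows "0 \<le> f s"
proof (cases "s = 0")
  case True then show ?thesis by (simp add: f0)
next
  case False
  then have s: "s > 0" using assms by simp
  have l: "((\<lambda>t. f t / t) \<longlongrightarrow> 0) (at_right 0)" using lim0 filterlim_at_split by blast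
  have "eventually (\<lambda>t. f t / t \<le> f s / s) (at_right 0)"
    unfolding eventually_at_right_field
    using s f2 by (intro exI[of _ s]) (auto simp: strict_mono_on_def less_imp_le)
  then have "0 \<le> f s / s" using tendsto_le[OF _ tendsto_const l] by auto
  then show ?thesis using s by (simp add: zero_le_divide_iff)
qed

lemma dfs: assumes s: "0 < s" shows "f s \<le> deriv f s * s"
proof -
  have "f 0 - f s \<ge> deriv f s * (0 - s)"
  proof (rule convex_on_imp_above_tangent[OF convex])
    show "connected {0::real..}" by (simp add: is_interval_connected_1[symmetric] is_interval_ci)
    show "s \<in> interior {0..}" using s by simp
    show "(0::real) \<in> {0..}" by simp
    show "(f has_real_derivative deriv f s) (at s within {0..})"
      using fder has_field_derivative_at_within by blast
  qed
  then show ?thesis by (simp add: f0)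
qed

lemma df_even: "deriv f (- s) = deriv f s"
proof -
  have "((\<lambda>x. f (- x)) has_real_derivative (- deriv f (- s))) (at s)"
    using DERIV_mirror fder[of "-s"] by auto
  moreover have "((\<lambda>x. f (- x)) has_real_derivative (- deriv f s)) (at s)"
    using odd fder[of s] by (auto intro!: derivative_eq_intros)
  ultimately show ?thesis using DERIV_unique by fastforce
qed

lemma dfnonneg: assumes "0 \<le> s" shows "0 \<le> deriv f s * s"
proof (cases "s = 0")
  case False
  then have "f s \<le> deriv f s * s" "0 \<le> f s" using assms dfs[of s] fpos[of s] by auto
  then show ?thesis by linarith
qed simp

definition \<beta> where "\<beta> = \<alpha>0 + 1"
lemma bpos: "0 < \<beta>" "\<alpha>0 < \<beta>" using a0 by (auto simp: \<beta>_def)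

lemma f_far: "\<exists>S. \<forall>s. S \<le> \<bar>s\<bar> \<longrightarrow> \<bar>f s\<bar> \<le> EE \<beta> s"
proof -
  obtain N where N: "\<And>s. s \<ge> N \<Longrightarrow> f s < EE \<beta> s" using crit_far[OF growth_f bpos(2) a0] by auto
  have "\<bar>f s\<bar> \<le> EE \<beta> s" if "max N 0 \<le> \<bar>s\<bar>" for s
  proof (cases "s \<ge> 0")
    case True then show ?thesis using N[of s] fpos[of s] that by auto
  next
    case False
    then have "f (-s) < EE \<beta> (-s)" "0 \<le> f (-s)" using N[of "-s"] fpos[of "-s"] that by auto
    then show ?thesis using odd by (auto simp: EE_def)
  qed
  then show ?thesis by blast
qed

lemma df_far: "\<exists>S. \<forall>s. S \<le> \<bar>s\<bar> \<longrightarrow> \<bar>deriv f s * s\<bar> \<le> EE \<beta> s"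
proof -
  obtain N where N: "\<And>s. s \<ge> N \<Longrightarrow> deriv f s * s < EE \<beta> s"
    using crit_far[OF growth_df bpos(2) a0] by auto
  have "\<bar>deriv f s * s\<bar> \<le> EE \<beta> s" if "max N 0 \<le> \<bar>s\<bar>" for s
  proof (cases "s \<ge> 0")
    case True then show ?thesis using N[of s] dfnonneg[of s] that by auto
  next
    case False
    then have "deriv f (-s) * (-s) < EE \<beta> (-s)" "0 \<le> deriv f (-s) * (-s)"
      using N[of "-s"] dfnonneg[of "-s"] that by auto
    then show ?thesis using df_even[of s] by (auto simp: EE_def)
  qed
  then show ?thesis by blast
qed

lemma f_near: "\<exists>\<delta>>0. \<forall>s. \<bar>s\<bar> < \<delta> \<longrightarrow> \<bar>f s\<bar> \<le> 1 * \<bar>s\<bar>"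
proof -
  have "eventually (\<lambda>s. dist (f s / s) 0 < 1) (at 0)"
    using tendsto_iff[THEN iffD1, rule_format, OF lim0, of 1] by simp
  then obtain d where d: "d > 0" "\<And>s. s \<noteq> 0 \<Longrightarrow> dist s 0 < d \<Longrightarrow> dist (f s / s) 0 < 1"
    unfolding eventually_at by auto
  have "\<bar>f s\<bar> \<le> 1 * \<bar>s\<bar>" if "\<bar>s\<bar> < d" for s
  proof (cases "s = 0")
    case True then show ?thesis by (simp add: f0)
  next
    case False
    then have "\<bar>f s / s\<bar> < 1" using d(2)[of s] that by simp
    then show ?thesis using False by (simp add: abs_divide divide_less_eq)
  qed
  then show ?thesis using d by blast
qed

lemma df_near: "\<exists>\<delta>>0. \<forall>s. \<bar>s\<bar> < \<delta> \<longrightarrow> \<bar>deriv f s * s\<bar> \<le> 1 * \<bar>s\<bar>"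
proof -
  have "isCont (deriv f) 0" using cont_d by (simp add: continuous_on_eq_continuous_at)
  then have "eventually (\<lambda>s. dist (deriv f s) 0 < 1) (at 0)"
    using tendsto_iff[THEN iffD1, rule_format, of "deriv f" "deriv f 0" "at 0" 1] df0
    unfolding isCont_def by simp
  then obtain d where d: "d > 0" "\<And>s. s \<noteq> 0 \<Longrightarrow> dist s 0 < d \<Longrightarrow> dist (deriv f s) 0 < 1"
    unfolding eventually_at by auto
  have "\<bar>deriv f s * s\<bar> \<le> 1 * \<bar>s\<bar>" if "\<bar>s\<bar> < d" for s
  proof (cases "s = 0")
    case True then show ?thesis by simp
  next
    case False
    then have "\<bar>deriv f s\<bar> < 1" using d(2)[of s] that by simp
    then show ?thesis by (simp add: abs_mult mult_left_le_one_le)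
  qed
  then show ?thesis using d by blast
qed

lemma f_bound: "\<exists>K\<ge>0. \<forall>s. \<bar>f s\<bar> \<le> K * sqrt (EE (2*\<beta>) s)"
proof -
  obtain \<delta> where d: "\<delta> > 0" "\<And>s. \<bar>s\<bar> < \<delta> \<Longrightarrow> \<bar>f s\<bar> \<le> 1 * \<bar>s\<bar>" using f_near by auto
  obtain S where S: "\<And>s. S \<le> \<bar>s\<bar> \<Longrightarrow> \<bar>f s\<bar> \<le> EE \<beta> s" using f_far by auto
  show ?thesis by (rule growth_bound[OF fcont d bpos(1) S])
qed

lemma dfs_cont: "continuous_on UNIV (\<lambda>s. deriv f s * s)"
  using cont_d by (intro continuous_intros) auto

lemma df_bound: "\<exists>K\<ge>0. \<forall>s. \<bar>deriv f s * s\<bar> \<le> K * sqrt (EE (2*\<beta>) s)"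
proof -
  obtain \<delta> where d: "\<delta> > 0" "\<And>s. \<bar>s\<bar> < \<delta> \<Longrightarrow> \<bar>deriv f s * s\<bar> \<le> 1 * \<bar>s\<bar>"
    using df_near by auto
  obtain S where S: "\<And>s. S \<le> \<bar>s\<bar> \<Longrightarrow> \<bar>deriv f s * s\<bar> \<le> EE \<beta> s" using df_far by auto
  show ?thesis by (rule growth_bound[OF dfs_cont d bpos(1) S])
qed

end


context fctx begin

definition \<kappa> where "\<kappa> = 4 * (2 * \<beta>)"
lemma kpos: "0 < \<kappa>" using bpos by (simp add: \<kappa>_def)

lemma prim_der: "(prim f has_real_derivative f s) (at s)"
proof -
  define a where "a = - (\<bar>s\<bar> + 1)"
  define b where "b = \<bar>s\<bar> + 1"
  have cab: "continuous_on {a..b} f" using fcont continuous_on_subset by blast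
  have intg: "f integrable_on {c..d}" if "a \<le> c" "d \<le> b" for c d
    using cab that by (intro integrable_continuous_real continuous_on_subset[OF cab]) auto
  define G where "G x = integral {a..x} f" for x
  have eq: "prim f x = G x - G 0" if "x \<in> {a..b}" for x
  proof (cases "0 \<le> x")
    case True
    have "integral {a..0} f + integral {0..x} f = integral {a..x} f"
      using True that by (intro Henstock_Kurzweil_Integration.integral_combine intg) (auto simp: a_def)
    then show ?thesis using True unfolding prim_def G_def by simp
  next
    case False
    have "integral {a..x} f + integral {x..0} f = integral {a..0} f"
      using False that by (intro Henstock_Kurzweil_Integration.integral_combine intg) (auto simp: b_def)
    then show ?thesis using False unfolding prim_def G_def by simp
  qed
  have sab: "s \<in> {a..b}" and sint: "s \<in> interior {a..b}" by (auto simp: a_def b_def)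
  have "(G has_real_derivative f s) (at s within {a..b})"
    unfolding G_def by (rule integral_has_real_derivative[OF cab sab])
  then have "(G has_real_derivative f s) (at s)" using at_within_interior[OF sint] by simp
  then have d: "((\<lambda>x. G x - G 0) has_real_derivative f s) (at s)"
    by (auto intro!: derivative_eq_intros)
  show ?thesis
    by (rule has_field_derivative_transform_within_open[OF d, of "{a<..<b}"])
       (use eq in \<open>auto simp: a_def b_def\<close>)
qed

lemma J1_der: "((\<lambda>s. f s * s) has_real_derivative (deriv f s * s + f s)) (at s)"
  using fder[of s] by (auto intro!: derivative_eq_intros)

lemma J1_bound: "\<exists>K\<ge>0. \<forall>s. \<bar>deriv f s * s + f s\<bar> \<le> K * sqrt (EE (2*\<beta>) s)"
proof -
  obtain K1 where K1: "K1 \<ge> 0" "\<And>s. \<bar>f s\<bar> \<le> K1 * sqrt (EE (2*\<beta>) s)" using f_bound by auto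
  obtain K2 where K2: "K2 \<ge> 0" "\<And>s. \<bar>deriv f s * s\<bar> \<le> K2 * sqrt (EE (2*\<beta>) s)" using df_bound by auto
  have "\<bar>deriv f s * s + f s\<bar> \<le> (K2 + K1) * sqrt (EE (2*\<beta>) s)" for s
    using K1(2)[of s] K2(2)[of s] by (simp add: algebra_simps)
  then show ?thesis using K1 K2 by (intro exI[of _ "K2+K1"]) auto
qed

lemma J1_diff: "0 < \<epsilon> \<Longrightarrow> \<exists>C. \<forall>a b. \<bar>(f (a+b) * (a+b)) - f a * a\<bar> \<le> \<epsilon> * EE \<kappa> a + C * EE \<kappa> b"
proof -
  assume e: "0 < \<epsilon>"
  obtain K where K: "K \<ge> 0" "\<And>s. \<bar>deriv f s * s + f s\<bar> \<le> K * sqrt (EE (2*\<beta>) s)" using J1_bound by auto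
  show ?thesis
    using diff_bound[of "\<lambda>s. f s * s" "\<lambda>s. deriv f s * s + f s", OF J1_der K(2) _ K(1) e] bpos
    unfolding \<kappa>_def by auto
qed

lemma J2_diff: "0 < \<epsilon> \<Longrightarrow> \<exists>C. \<forall>a b. \<bar>prim f (a+b) - prim f a\<bar> \<le> \<epsilon> * EE \<kappa> a + C * EE \<kappa> b"
proof -
  assume e: "0 < \<epsilon>"
  obtain K where K: "K \<ge> 0" "\<And>s. \<bar>f s\<bar> \<le> K * sqrt (EE (2*\<beta>) s)" using f_bound by auto
  show ?thesis
    using diff_bound[of "prim f" f, OF prim_der K(2) _ K(1) e] bpos
    unfolding \<kappa>_def by auto
qed

lemma J2_cont: "continuous_on UNIV (prim f)"
  by (meson DERIV_isCont continuous_at_imp_continuous_on prim_der)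

lemma J1_cont: "continuous_on UNIV (\<lambda>s. f s * s)"
  using fcont by (intro continuous_intros) auto

lemma J2_0: "prim f 0 = 0" unfolding prim_def by simp
lemma J1_0: "f 0 * 0 = 0" by simp

end


lemma EE_meas[measurable]: "EE k \<in> borel_measurable borel"
  unfolding EE_def by measurable

lemma EE_cont: "continuous_on UNIV (EE k)"
  unfolding EE_def by (intro continuous_intros)

lemma nn_int_bound:
  fixes g :: "'a \<Rightarrow> real"
  assumes [measurable]: "g \<in> borel_measurable M" and nn: "\<And>x. 0 \<le> g x"
    and b: "(\<integral>\<^sup>+x. ennreal (g x) \<partial>M) \<le> ennreal B" and B: "0 \<le> B"
  shows "integrable M g" "(\<integral>x. g x \<partial>M) \<le> B"
proof -
  show i: "integrable M g"
    by (rule integrableI_bounded) (use b nn in \<open>auto simp: top_unique ennreal_less_top intro: le_less_trans\<close>)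
  have "ennreal (\<integral>x. g x \<partial>M) = (\<integral>\<^sup>+x. ennreal (g x) \<partial>M)"
    using nn_integral_eq_integral[OF i] nn by auto
  then show "(\<integral>x. g x \<partial>M) \<le> B" using b B by (simp add: ennreal_le_iff[symmetric])
qed

lemma EE_diff: "0 \<le> k \<Longrightarrow> EE k (a - b) \<le> EE (4*k) a + EE (4*k) b"
proof -
  assume k: "0 \<le> k"
  have "(a - b)\<^sup>2 \<le> (\<bar>a\<bar> + \<bar>b\<bar>)\<^sup>2"
    by (metis abs_ge_zero abs_triangle_ineq4 power2_abs power_mono)
  then have "EE k (a - b) \<le> EE k (\<bar>a\<bar> + \<bar>b\<bar>)" using EE_mono k by blast
  also have "\<dots> \<le> EE (4*k) a + EE (4*k) b" using EE_sum k by blast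
  finally show ?thesis .
qed

lemma BL_core:
  fixes j :: "real \<Rightarrow> real" and v :: "nat \<Rightarrow> real \<Rightarrow> real" and w :: "real \<Rightarrow> real"
  assumes jc: "continuous_on UNIV j" and j0: "j 0 = 0"
    and jd: "\<And>\<epsilon>. 0 < \<epsilon> \<Longrightarrow> \<exists>C. \<forall>a b. \<bar>j (a+b) - j a\<bar> \<le> \<epsilon> * EE \<kappa> a + C * EE \<kappa> b"
    and kpos: "0 < \<kappa>"
    and meas[measurable]: "\<And>n. v n \<in> borel_measurable lborel" and wmeas[measurable]: "w \<in> borel_measurable lborel"
    and bnd: "\<And>n. (\<integral>\<^sup>+x. ennreal (EE (4*\<kappa>) (v n x)) \<partial>lborel) \<le> ennreal B" and B0: "0 \<le> B"
    and conv: "AE x in lborel. (\<lambda>n. v n x) \<longlonglongrightarrow> w x"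
  shows "(\<lambda>n. (\<integral>x. j (v n x) \<partial>lborel) - (\<integral>x. j (v n x - w x) \<partial>lborel) - (\<integral>x. j (w x) \<partial>lborel)) \<longlonglongrightarrow> 0"
proof -
  have jm[measurable]: "j \<in> borel_measurable borel" using jc by (rule borel_measurable_continuous_onI)
  have k4: "0 \<le> 4*\<kappa>" "0 \<le> \<kappa>" using kpos by auto
  obtain C0' where C0': "\<forall>a b. \<bar>j (a+b) - j a\<bar> \<le> 1 * EE \<kappa> a + C0' * EE \<kappa> b" using jd[of 1] by auto
  define C0 where "C0 = max C0' 0"
  have C00: "0 \<le> C0" unfolding C0_def by simp
  have jb: "\<bar>j s\<bar> \<le> C0 * EE \<kappa> s" for s
  proof -
    have "\<bar>j s\<bar> \<le> C0' * EE \<kappa> s" using C0'[rule_format, of 0 s] j0 by (simp add: EE_def)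
    also have "\<dots> \<le> C0 * EE \<kappa> s" unfolding C0_def using EE_nonneg[OF k4(2)] by (intro mult_right_mono) auto
    finally show ?thesis .
  qed
  have wb: "(\<integral>\<^sup>+x. ennreal (EE (4*\<kappa>) (w x)) \<partial>lborel) \<le> ennreal B"
  proof -
    have "(\<integral>\<^sup>+x. ennreal (EE (4*\<kappa>) (w x)) \<partial>lborel) = (\<integral>\<^sup>+x. liminf (\<lambda>n. ennreal (EE (4*\<kappa>) (v n x))) \<partial>lborel)"
    proof (rule nn_integral_cong_AE)
      show "AE x in lborel. ennreal (EE (4*\<kappa>) (w x)) = liminf (\<lambda>n. ennreal (EE (4*\<kappa>) (v n x)))"
        using conv
      proof eventually_elim
        case (elim x)
        have "(\<lambda>n. ennreal (EE (4*\<kappa>) (v n x))) \<longlonglongrightarrow> ennreal (EE (4*\<kappa>) (w x))"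
          using elim unfolding EE_def by (intro tendsto_intros)
        then show ?case by (simp add: lim_imp_Liminf)
      qed
    qed
    also have "\<dots> \<le> liminf (\<lambda>n. (\<integral>\<^sup>+x. ennreal (EE (4*\<kappa>) (v n x)) \<partial>lborel))"
      by (rule nn_integral_liminf) measurable
    also have "\<dots> \<le> limsup (\<lambda>n. (\<integral>\<^sup>+x. ennreal (EE (4*\<kappa>) (v n x)) \<partial>lborel))"
      by (rule Liminf_le_Limsup) simp
    also have "\<dots> \<le> ennreal B" by (rule Limsup_bounded) (use bnd in auto)
    finally show ?thesis .
  qed
  have Ev: "integrable lborel (\<lambda>x. EE (4*\<kappa>) (v n x))" "(\<integral>x. EE (4*\<kappa>) (v n x) \<partial>lborel) \<le> B" for n
    using nn_int_bound[OF _ _ bnd[of n] B0] EE_nonneg[OF k4(1)] by auto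
  have Ew: "integrable lborel (\<lambda>x. EE (4*\<kappa>) (w x))" "(\<integral>x. EE (4*\<kappa>) (w x) \<partial>lborel) \<le> B"
    using nn_int_bound[OF _ _ wb B0] EE_nonneg[OF k4(1)] by auto
  have Ewk: "integrable lborel (\<lambda>x. EE \<kappa> (w x))"
    by (rule Bochner_Integration.integrable_bound[OF Ew(1)]) (use EE_nonneg k4 EE_mono_k in auto)
  have Evk: "integrable lborel (\<lambda>x. EE \<kappa> (v n x))" for n
    by (rule Bochner_Integration.integrable_bound[OF Ev(1)[of n]]) (use EE_nonneg k4 EE_mono_k in auto)
  have Ed: "integrable lborel (\<lambda>x. EE \<kappa> (v n x - w x))" for n
    by (rule Bochner_Integration.integrable_bound[OF Bochner_Integration.integrable_add[OF Ev(1)[of n] Ew(1)]])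
       (use EE_nonneg k4 EE_diff in \<open>auto simp: add_nonneg_nonneg\<close>)
  have Edb: "(\<integral>x. EE \<kappa> (v n x - w x) \<partial>lborel) \<le> 2 * B" for n
  proof -
    have "(\<integral>x. EE \<kappa> (v n x - w x) \<partial>lborel) \<le> (\<integral>x. EE (4*\<kappa>) (v n x) + EE (4*\<kappa>) (w x) \<partial>lborel)"
      by (intro integral_mono Ed Bochner_Integration.integrable_add Ev Ew) (use EE_diff k4 in auto)
    also have "\<dots> \<le> 2 * B" using Ev(2)[of n] Ew(2) by (simp add: Bochner_Integration.integral_add[OF Ev(1) Ew(1)])
    finally show ?thesis .
  qed
  have ji: "integrable lborel (\<lambda>x. j (u x))" if um[measurable]: "u \<in> borel_measurable lborel"
      and ui: "integrable lborel (\<lambda>x. EE \<kappa> (u x))" for u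
    by (rule Bochner_Integration.integrable_bound[OF integrable_mult_right[OF ui, of C0]])
       (use jb EE_nonneg k4 C00 in \<open>auto simp: abs_mult\<close>)
  have i1: "integrable lborel (\<lambda>x. j (v n x))" for n by (rule ji[OF _ Evk]) measurable
  have i2: "integrable lborel (\<lambda>x. j (v n x - w x))" for n by (rule ji[OF _ Ed]) measurable
  have i3: "integrable lborel (\<lambda>x. j (w x))" by (rule ji[OF _ Ewk]) measurable
  define g where "g n x = \<bar>j (v n x) - j (v n x - w x) - j (w x)\<bar>" for n x
  have gm[measurable]: "g n \<in> borel_measurable lborel" for n unfolding g_def by measurable
  have gi: "integrable lborel (g n)" for n
    unfolding g_def by (intro integrable_abs Bochner_Integration.integrable_diff i1 i2 i3)
  have Xg: "\<bar>(\<integral>x. j (v n x) \<partial>lborel) - (\<integral>x. j (v n x - w x) \<partial>lborel) - (\<integral>x. j (w x) \<partial>lborel)\<bar>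
      \<le> (\<integral>x. g n x \<partial>lborel)" for n
  proof -
    have "(\<integral>x. j (v n x) \<partial>lborel) - (\<integral>x. j (v n x - w x) \<partial>lborel) - (\<integral>x. j (w x) \<partial>lborel)
        = (\<integral>x. j (v n x) - j (v n x - w x) - j (w x) \<partial>lborel)"
      using i1 i2 i3 by simp
    also have "\<bar>\<dots>\<bar> \<le> (\<integral>x. g n x \<partial>lborel)" unfolding g_def
      by (rule integral_abs_bound)
    finally show ?thesis .
  qed
  have jcont: "isCont j x" for x using jc by (simp add: continuous_on_eq_continuous_at)
  show ?thesis
  proof (rule LIMSEQ_I)
    fix e :: real assume e: "0 < e"
    define \<epsilon> where "\<epsilon> = e / (4 * (2 * B + 1))"
    have epos: "0 < \<epsilon>" unfolding \<epsilon>_def using e B0 by simp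
    obtain C' where C': "\<forall>a b. \<bar>j (a+b) - j a\<bar> \<le> \<epsilon> * EE \<kappa> a + C' * EE \<kappa> b" using jd[OF epos] by auto
    define C where "C = max C' 0"
    have C0: "0 \<le> C" unfolding C_def by simp
    have jdC: "\<bar>j (a+b) - j a\<bar> \<le> \<epsilon> * EE \<kappa> a + C * EE \<kappa> b" for a b
    proof -
      have "C' * EE \<kappa> b \<le> C * EE \<kappa> b" unfolding C_def using EE_nonneg[OF k4(2)] by (intro mult_right_mono) auto
      then show ?thesis using C'[rule_format, of a b] by linarith
    qed
    define W where "W n x = max 0 (g n x - \<epsilon> * EE \<kappa> (v n x - w x))" for n x
    have Wm[measurable]: "W n \<in> borel_measurable lborel" for n unfolding W_def by measurable
    have Wb: "norm (W n x) \<le> (C + C0) * EE \<kappa> (w x)" for n x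
    proof -
      have "g n x \<le> \<bar>j (v n x - w x + w x) - j (v n x - w x)\<bar> + \<bar>j (w x)\<bar>"
        unfolding g_def by simp
      also have "\<dots> \<le> \<epsilon> * EE \<kappa> (v n x - w x) + C * EE \<kappa> (w x) + C0 * EE \<kappa> (w x)"
        using jdC[of "v n x - w x" "w x"] jb[of "w x"] by linarith
      finally have "g n x - \<epsilon> * EE \<kappa> (v n x - w x) \<le> (C + C0) * EE \<kappa> (w x)" by (simp add: algebra_simps)
      moreover have "0 \<le> (C + C0) * EE \<kappa> (w x)" using C0 C00 EE_nonneg[OF k4(2)] by simp
      ultimately show ?thesis unfolding W_def by simp
    qed
    have wint: "integrable lborel (\<lambda>x. (C + C0) * EE \<kappa> (w x))" by (intro integrable_mult_right Ewk)
    have Wae: "AE x in lborel. (\<lambda>n. W n x) \<longlonglongrightarrow> 0" using conv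
      proof eventually_elim
        case (elim x)
        have d: "(\<lambda>n. v n x - w x) \<longlonglongrightarrow> 0" using elim by (simp add: LIM_zero)
        have "(\<lambda>n. g n x) \<longlonglongrightarrow> \<bar>j (w x) - j 0 - j (w x)\<bar>" unfolding g_def
          by (intro tendsto_intros isCont_tendsto_compose[OF jcont] elim d)
        moreover have "(\<lambda>n. EE \<kappa> (v n x - w x)) \<longlonglongrightarrow> EE \<kappa> 0"
          by (rule isCont_tendsto_compose[OF _ d]) (use EE_cont in \<open>simp add: continuous_on_eq_continuous_at\<close>)
        ultimately have "(\<lambda>n. W n x) \<longlonglongrightarrow> max 0 (\<bar>j (w x) - j 0 - j (w x)\<bar> - \<epsilon> * EE \<kappa> 0)"
          unfolding W_def by (intro tendsto_intros)
        then show ?case by (simp add: j0 EE_def)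
      qed
    have Wbd: "\<And>n. AE x in lborel. norm (W n x) \<le> (C + C0) * EE \<kappa> (w x)" using Wb by auto
    have zm: "(\<lambda>x::real. 0::real) \<in> borel_measurable lborel" by simp
    have Wlim: "(\<lambda>n. \<integral>x. W n x \<partial>lborel) \<longlonglongrightarrow> (\<integral>x. 0 \<partial>lborel)"
      using integral_dominated_convergence[OF zm Wm wint Wae Wbd] by simp
    have Wi: "integrable lborel (W n)" for n
      by (rule Bochner_Integration.integrable_bound[OF integrable_mult_right[OF Ewk, of "C + C0"]])
         (use Wb C0 C00 EE_nonneg[OF k4(2)] in auto)
    have "eventually (\<lambda>n. (\<integral>x. W n x \<partial>lborel) < e/2) sequentially"
      using order_tendstoD(2)[OF Wlim, of "e/2"] e by simp
    then obtain N where N: "\<And>n. n \<ge> N \<Longrightarrow> (\<integral>x. W n x \<partial>lborel) < e/2"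
      unfolding eventually_sequentially by blast
    have "\<bar>(\<integral>x. j (v n x) \<partial>lborel) - (\<integral>x. j (v n x - w x) \<partial>lborel) - (\<integral>x. j (w x) \<partial>lborel) - 0\<bar> < e"
      if n: "n \<ge> N" for n
    proof -
      have "(\<integral>x. g n x \<partial>lborel) \<le> (\<integral>x. W n x + \<epsilon> * EE \<kappa> (v n x - w x) \<partial>lborel)"
        by (rule integral_mono[OF gi[of n] Bochner_Integration.integrable_add[OF Wi[of n] integrable_mult_right[OF Ed[of n]]]])
           (simp add: W_def)
      also have "\<dots> = (\<integral>x. W n x \<partial>lborel) + \<epsilon> * (\<integral>x. EE \<kappa> (v n x - w x) \<partial>lborel)"
        using Wi Ed by simp
      also have "\<dots> < e/2 + \<epsilon> * (2 * B)"
        using N[OF n] Edb[of n] epos by (intro add_less_le_mono mult_left_mono) auto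
      also have "\<dots> \<le> e"
      proof -
        have "\<epsilon> * (2 * B) \<le> \<epsilon> * (2 * (2 * B + 1))" using epos B0 by (intro mult_left_mono) auto
        also have "\<epsilon> * (2 * (2 * B + 1)) = e / 2" unfolding \<epsilon>_def using B0 by (simp add: field_simps)
        finally show ?thesis by linarith
      qed
      finally show ?thesis using Xg[of n] by simp
    qed
    then show "\<exists>no. \<forall>n\<ge>no. norm ((\<integral>x. j (v n x) \<partial>lborel) - (\<integral>x. j (v n x - w x) \<partial>lborel) - (\<integral>x. j (w x) \<partial>lborel) - 0) < e"
      by auto
  qed
qed


lemma H12D:
  assumes "v \<in> H12"
  shows "v \<in> borel_measurable lborel" "integrable lborel (\<lambda>x. (v x)\<^sup>2)" "gagliardo v < \<infinity>"
  using assms unfolding H12_def by auto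

lemma H12_norm_ge: assumes "v \<in> H12" shows "sqrt (\<integral>x. (v x)\<^sup>2 \<partial>lborel) \<le> H12_norm v"
  unfolding H12_norm_def by (simp add: enn2real_nonneg)

lemma H12_norm_sq: assumes "v \<in> H12"
  shows "(H12_norm v)\<^sup>2 = (\<integral>x. (v x)\<^sup>2 \<partial>lborel) + enn2real (gagliardo v)"
  unfolding H12_norm_def by (simp add: enn2real_nonneg)

lemma ind_fin[simp]: "emeasure lborel {a..<b::real} < top"
proof -
  have "emeasure lborel {a..<b::real} \<le> emeasure lborel {a..b}" by (intro emeasure_mono) auto
  also have "\<dots> < top" by (cases "a \<le> b") auto
  finally show ?thesis .
qed

lemma int_ind_v:
  assumes "v \<in> H12"
  shows "integrable lborel (\<lambda>x. indicator {a..<b} x * v x)"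
proof -
  have [measurable]: "v \<in> borel_measurable lborel" using H12D[OF assms] by simp
  have i: "integrable lborel (\<lambda>x. indicator {a..<b} x + (v x)\<^sup>2 :: real)"
    using H12D(2)[OF assms] by (intro Bochner_Integration.integrable_add integrable_real_indicator) auto
  have b: "norm (indicator {a..<b} x * v x) \<le> norm (indicator {a..<b} x + (v x)\<^sup>2 :: real)" for x
  proof -
    have "\<bar>v x\<bar> \<le> 1 + (v x)\<^sup>2"
    proof (cases "\<bar>v x\<bar> \<le> 1")
      case True then show ?thesis by (simp add: add_increasing2)
    next
      case False
      then have "\<bar>v x\<bar> * 1 \<le> \<bar>v x\<bar> * \<bar>v x\<bar>" by (intro mult_left_mono) auto
      then show ?thesis by (simp add: power2_eq_square abs_mult_self_eq)
    qed
    then show ?thesis by (auto simp: indicator_def)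
  qed
  show ?thesis by (rule Bochner_Integration.integrable_bound[OF i]) (use b in auto)
qed

lemma int_ind_v2:
  assumes "v \<in> H12"
  shows "integrable lborel (\<lambda>x. indicator {a..<b} x * (v x)\<^sup>2)"
proof -
  have [measurable]: "v \<in> borel_measurable lborel" using H12D[OF assms] by simp
  show ?thesis by (rule Bochner_Integration.integrable_bound[OF H12D(2)[OF assms]]) (auto simp: indicator_def)
qed

lemma CS_ind:
  assumes v: "v \<in> H12" and ab: "a \<le> b"
  shows "\<bar>\<integral>x. indicator {a..<b} x * v x \<partial>lborel\<bar> \<le> sqrt (b - a) * sqrt (\<integral>x. (v x)\<^sup>2 \<partial>lborel)"
proof -
  have [measurable]: "v \<in> borel_measurable lborel" using H12D[OF v] by simp
  define A where "A = (\<integral>x. (v x)\<^sup>2 \<partial>lborel)"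
  have A0: "0 \<le> A" unfolding A_def by simp
  consider "A = 0" | "b = a" | "A > 0" "b > a" using A0 ab by linarith
  then show ?thesis
  proof cases
    case 1
    have "AE x in lborel. (v x)\<^sup>2 = 0"
      using integral_nonneg_eq_0_iff_AE[OF H12D(2)[OF v]] 1 unfolding A_def by simp
    then have "AE x in lborel. indicator {a..<b} x * v x = 0" by auto
    moreover have m1: "(\<lambda>x. indicator {a..<b} x * v x) \<in> borel_measurable lborel" by measurable
    ultimately have "(\<integral>x. indicator {a..<b} x * v x \<partial>lborel) = (\<integral>x. 0 \<partial>lborel)"
      using integral_cong_AE[OF m1, of "\<lambda>x. 0"] by simp
    then show ?thesis using ab by simp
  next
    case 2 then show ?thesis by simp
  next
    case 3
    define t where "t = sqrt A / sqrt (b - a)"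
    have t0: "t > 0" unfolding t_def using 3 by simp
    have pw: "\<bar>indicator {a..<b} x * v x\<bar> \<le> (t * indicator {a..<b} x + (v x)\<^sup>2 / t) / 2" for x
    proof (cases "x \<in> {a..<b}")
      case True
      have "0 \<le> (t - \<bar>v x\<bar>)\<^sup>2" by simp
      then have "2 * t * \<bar>v x\<bar> \<le> t * t + (v x)\<^sup>2" by (simp add: power2_eq_square algebra_simps)
      then show ?thesis using True t0 by (simp add: field_simps power2_eq_square)
    next
      case False then show ?thesis using t0 by simp
    qed
    have ii: "integrable lborel (\<lambda>x. (t * indicator {a..<b} x + (v x)\<^sup>2 / t) / 2 :: real)"
      using H12D(2)[OF v] by (intro integrable_divide Bochner_Integration.integrable_add integrable_mult_right integrable_real_indicator) auto
    have "\<bar>\<integral>x. indicator {a..<b} x * v x \<partial>lborel\<bar> \<le> (\<integral>x. (t * indicator {a..<b} x + (v x)\<^sup>2 / t) / 2 \<partial>lborel)"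
      by (rule integral_abs_bound_integral[OF int_ind_v[OF v] ii]) (use pw in auto)
    also have "\<dots> = (t * (b - a) + A / t) / 2"
      using H12D(2)[OF v] 3 unfolding A_def by (simp add: Bochner_Integration.integral_add)
    also have "\<dots> = sqrt (b - a) * sqrt A"
    proof -
      have sA: "sqrt A * sqrt A = A" "sqrt (b-a) * sqrt (b-a) = b - a" using 3 by auto
      have "t * (b - a) = sqrt A * sqrt (b - a)" unfolding t_def using 3 sA(2)
        by (simp add: field_simps)
      moreover have "A / t = sqrt A * sqrt (b - a)" unfolding t_def using 3 sA(1)
        by (simp add: field_simps)
      ultimately show ?thesis by simp
    qed
    finally show ?thesis unfolding A_def .
  qed
qed

lemma L_dual:
  assumes ab: "a \<le> b"
  shows "(\<lambda>v. \<integral>x. indicator {a..<b} x * v x \<partial>lborel) \<in> H12_dual"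
  unfolding H12_dual_def
proof (intro CollectI conjI ballI allI)
  fix v w :: "real \<Rightarrow> real" and \<alpha> \<beta> :: real
  assume v: "v \<in> H12" and w: "w \<in> H12"
  have "(\<integral>x. indicator {a..<b} x * (\<alpha> * v x + \<beta> * w x) \<partial>lborel)
      = (\<integral>x. \<alpha> * (indicator {a..<b} x * v x) + \<beta> * (indicator {a..<b} x * w x) \<partial>lborel)"
    by (simp add: algebra_simps)
  also have "\<dots> = \<alpha> * (\<integral>x. indicator {a..<b} x * v x \<partial>lborel) + \<beta> * (\<integral>x. indicator {a..<b} x * w x \<partial>lborel)"
    using int_ind_v[OF v] int_ind_v[OF w] by (simp add: Bochner_Integration.integral_add)
  finally show "(\<integral>x. indicator {a..<b} x * (\<alpha> * v x + \<beta> * w x) \<partial>lborel)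
      = \<alpha> * (\<integral>x. indicator {a..<b} x * v x \<partial>lborel) + \<beta> * (\<integral>x. indicator {a..<b} x * w x \<partial>lborel)" .
next
  show "\<exists>C. \<forall>v\<in>H12. \<bar>\<integral>x. indicator {a..<b} x * v x \<partial>lborel\<bar> \<le> C * H12_norm v"
  proof (intro exI ballI)
    fix v assume v: "v \<in> H12"
    have "\<bar>\<integral>x. indicator {a..<b} x * v x \<partial>lborel\<bar> \<le> sqrt (b - a) * sqrt (\<integral>x. (v x)\<^sup>2 \<partial>lborel)"
      by (rule CS_ind[OF v ab])
    also have "\<dots> \<le> sqrt (b - a) * H12_norm v" using ab by (intro mult_left_mono H12_norm_ge v) auto
    finally show "\<bar>\<integral>x. indicator {a..<b} x * v x \<partial>lborel\<bar> \<le> sqrt (b - a) * H12_norm v" .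
  qed
qed


lemma sq_expand_int:
  assumes v: "v \<in> H12"
  shows "(\<integral>x. indicator {c..<d} x * (v x - t)\<^sup>2 \<partial>lborel) =
    (\<integral>x. indicator {c..<d} x * (v x)\<^sup>2 \<partial>lborel) - 2 * t * (\<integral>x. indicator {c..<d} x * v x \<partial>lborel)
      + t\<^sup>2 * measure lborel {c..<d}"
proof -
  have "(\<integral>x. indicator {c..<d} x * (v x - t)\<^sup>2 \<partial>lborel) =
     (\<integral>x. indicator {c..<d} x * (v x)\<^sup>2 - (2 * t) * (indicator {c..<d} x * v x) + t\<^sup>2 * indicator {c..<d} x \<partial>lborel)"
    by (intro Bochner_Integration.integral_cong) (auto simp: indicator_def power2_eq_square algebra_simps)
  also have "\<dots> = (\<integral>x. indicator {c..<d} x * (v x)\<^sup>2 \<partial>lborel) - 2 * t * (\<integral>x. indicator {c..<d} x * v x \<partial>lborel)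
      + t\<^sup>2 * measure lborel {c..<d}"
    using int_ind_v[OF v] int_ind_v2[OF v]
    by (subst Bochner_Integration.integral_add) (auto intro!: integrable_real_indicator simp: Bochner_Integration.integral_diff)
  finally show ?thesis .
qed

lemma mean_min:
  assumes v: "v \<in> H12" and cd: "c < d"
  defines "m \<equiv> (\<integral>x. indicator {c..<d} x * v x \<partial>lborel) / (d - c)"
  shows "(\<integral>x. indicator {c..<d} x * (v x - m)\<^sup>2 \<partial>lborel) \<le> (\<integral>x. indicator {c..<d} x * (v x - t)\<^sup>2 \<partial>lborel)"
proof -
  define P where "P = (\<integral>x. indicator {c..<d} x * (v x)\<^sup>2 \<partial>lborel)"
  define Q where "Q = (\<integral>x. indicator {c..<d} x * v x \<partial>lborel)"
  have h: "measure lborel {c..<d} = d - c" using cd by simp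
  have Qm: "Q = m * (d - c)" unfolding m_def Q_def using cd by simp
  have "P - 2 * m * Q + m\<^sup>2 * (d - c) \<le> P - 2 * t * Q + t\<^sup>2 * (d - c)"
  proof -
    have "(P - 2 * t * Q + t\<^sup>2 * (d - c)) - (P - 2 * m * Q + m\<^sup>2 * (d - c)) = (d - c) * (t - m)\<^sup>2"
      unfolding Qm by (simp add: power2_eq_square algebra_simps)
    moreover have "0 \<le> (d - c) * (t - m)\<^sup>2" using cd by simp
    ultimately show ?thesis by linarith
  qed
  then show ?thesis using sq_expand_int[OF v, of c d m] sq_expand_int[OF v, of c d t] h
    unfolding P_def Q_def by simp
qed

definition Gq :: "(real \<Rightarrow> real) \<Rightarrow> real \<times> real \<Rightarrow> ennreal" where
  "Gq v z = ennreal ((v (fst z) - v (snd z))\<^sup>2 / (fst z - snd z)\<^sup>2)"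

lemma gagliardo_Gq: "gagliardo v = (\<integral>\<^sup>+z. Gq v z \<partial>(lborel \<Otimes>\<^sub>M lborel))"
  unfolding gagliardo_def Gq_def ..

lemma lprod_meas_iff: "f \<in> borel_measurable (lborel \<Otimes>\<^sub>M lborel) \<longleftrightarrow> f \<in> borel_measurable (borel \<Otimes>\<^sub>M borel)"
  by (simp add: measurable_cong_sets[OF sets_pair_measure_cong[OF sets_lborel sets_lborel] refl])

lemma Gq_meas[measurable]:
  assumes [measurable]: "v \<in> borel_measurable borel"
  shows "Gq v \<in> borel_measurable (lborel \<Otimes>\<^sub>M lborel)"
  unfolding Gq_def lprod_meas_iff by measurable

lemma cell_bound:
  assumes v: "v \<in> H12" and cd: "c < d"
  defines "m \<equiv> (\<integral>x. indicator {c..<d} x * v x \<partial>lborel) / (d - c)"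
  shows "ennreal ((d - c) * (\<integral>x. indicator {c..<d} x * (v x - m)\<^sup>2 \<partial>lborel))
    \<le> ennreal ((d - c)\<^sup>2) * (\<integral>\<^sup>+z. indicator ({c..<d} \<times> {c..<d}) z * Gq v z \<partial>(lborel \<Otimes>\<^sub>M lborel))"
proof -
  have vm[measurable]: "v \<in> borel_measurable lborel" using H12D[OF v] by simp
  have vb[measurable]: "v \<in> borel_measurable borel" using H12D[OF v] by simp
  define h where "h = d - c"
  have h0: "0 < h" unfolding h_def using cd by simp
  define X where "X = (\<integral>x. indicator {c..<d} x * (v x - m)\<^sup>2 \<partial>lborel)"
  have X0: "0 \<le> X" unfolding X_def by (intro integral_nonneg_AE) auto
  have iy: "integrable lborel (\<lambda>x. indicator {c..<d} x * (v x - t)\<^sup>2)" for t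
  proof -
    have "integrable lborel (\<lambda>x. indicator {c..<d} x * (v x)\<^sup>2 - (2 * t) * (indicator {c..<d} x * v x) + t\<^sup>2 * indicator {c..<d} x)"
      using int_ind_v[OF v] int_ind_v2[OF v]
      by (intro Bochner_Integration.integrable_add Bochner_Integration.integrable_diff integrable_mult_right integrable_real_indicator) auto
    then show ?thesis
      by (rule back_subst[of "integrable lborel"]) (auto simp: indicator_def power2_eq_square algebra_simps fun_eq_iff)
  qed
  have "ennreal (h * X) = (\<integral>\<^sup>+y. ennreal X * indicator {c..<d} y \<partial>lborel)"
    using cd by (subst nn_integral_cmult_indicator) (auto simp: h_def ennreal_mult' X0 mult.commute)
  also have "\<dots> \<le> (\<integral>\<^sup>+y. (\<integral>\<^sup>+x. ennreal (indicator {c..<d} x * (v x - v y)\<^sup>2) \<partial>lborel) * indicator {c..<d} y \<partial>lborel)"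
  proof (intro nn_integral_mono)
    fix y
    have "X \<le> (\<integral>x. indicator {c..<d} x * (v x - v y)\<^sup>2 \<partial>lborel)"
      unfolding X_def m_def by (rule mean_min[OF v cd])
    also have "ennreal \<dots> = (\<integral>\<^sup>+x. ennreal (indicator {c..<d} x * (v x - v y)\<^sup>2) \<partial>lborel)"
      by (rule nn_integral_eq_integral[OF iy, symmetric]) auto
    finally have "ennreal X \<le> (\<integral>\<^sup>+x. ennreal (indicator {c..<d} x * (v x - v y)\<^sup>2) \<partial>lborel)"
      by (simp add: ennreal_leI)
    then show "ennreal X * indicator {c..<d} y \<le> (\<integral>\<^sup>+x. ennreal (indicator {c..<d} x * (v x - v y)\<^sup>2) \<partial>lborel) * indicator {c..<d} y"
      by (intro mult_right_mono) auto
  qed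
  also have "\<dots> \<le> (\<integral>\<^sup>+y. (\<integral>\<^sup>+x. ennreal (h\<^sup>2) * (indicator ({c..<d} \<times> {c..<d}) (y, x) * Gq v (y, x)) \<partial>lborel) \<partial>lborel)"
  proof (intro nn_integral_mono)
    fix y
    show "(\<integral>\<^sup>+x. ennreal (indicator {c..<d} x * (v x - v y)\<^sup>2) \<partial>lborel) * indicator {c..<d} y
        \<le> (\<integral>\<^sup>+x. ennreal (h\<^sup>2) * (indicator ({c..<d} \<times> {c..<d}) (y, x) * Gq v (y, x)) \<partial>lborel)"
    proof (cases "y \<in> {c..<d}")
      case False then show ?thesis by simp
    next
      case yin: True
      have "(\<integral>\<^sup>+x. ennreal (indicator {c..<d} x * (v x - v y)\<^sup>2) \<partial>lborel)
          \<le> (\<integral>\<^sup>+x. ennreal (h\<^sup>2) * (indicator ({c..<d} \<times> {c..<d}) (y, x) * Gq v (y, x)) \<partial>lborel)"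
      proof (intro nn_integral_mono)
        fix x
        show "ennreal (indicator {c..<d} x * (v x - v y)\<^sup>2) \<le> ennreal (h\<^sup>2) * (indicator ({c..<d} \<times> {c..<d}) (y, x) * Gq v (y, x))"
        proof (cases "x \<in> {c..<d}")
          case False then show ?thesis by simp
        next
          case xin: True
          have "(v x - v y)\<^sup>2 \<le> h\<^sup>2 * ((v y - v x)\<^sup>2 / (y - x)\<^sup>2)"
          proof (cases "x = y")
            case True then show ?thesis by simp
          next
            case False
            have yx: "(y - x)\<^sup>2 > 0" using False by simp
            have "\<bar>y - x\<bar> \<le> h" using xin yin unfolding h_def by auto
            then have "(y - x)\<^sup>2 \<le> h\<^sup>2" by (metis abs_ge_zero power2_abs power_mono)
            then have "(v y - v x)\<^sup>2 / (y - x)\<^sup>2 * (y - x)\<^sup>2 \<le> (v y - v x)\<^sup>2 / (y - x)\<^sup>2 * h\<^sup>2"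
              by (intro mult_left_mono) auto
            then show ?thesis using yx by (simp add: power2_commute mult.commute)
          qed
          then show ?thesis using xin yin unfolding Gq_def
            by (simp add: ennreal_mult'[symmetric] ennreal_leI)
        qed
      qed
      then show ?thesis using yin by simp
    qed
  qed
  also have "\<dots> = ennreal (h\<^sup>2) * (\<integral>\<^sup>+y. (\<integral>\<^sup>+x. indicator ({c..<d} \<times> {c..<d}) (y, x) * Gq v (y, x) \<partial>lborel) \<partial>lborel)"
  proof -
    have "(\<integral>\<^sup>+y. (\<integral>\<^sup>+x. ennreal (h\<^sup>2) * (indicator ({c..<d} \<times> {c..<d}) (y, x) * Gq v (y, x)) \<partial>lborel) \<partial>lborel)
      = (\<integral>\<^sup>+y. ennreal (h\<^sup>2) * (\<integral>\<^sup>+x. indicator ({c..<d} \<times> {c..<d}) (y, x) * Gq v (y, x) \<partial>lborel) \<partial>lborel)"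
      by (intro nn_integral_cong nn_integral_cmult) measurable
    also have "\<dots> = ennreal (h\<^sup>2) * (\<integral>\<^sup>+y. (\<integral>\<^sup>+x. indicator ({c..<d} \<times> {c..<d}) (y, x) * Gq v (y, x) \<partial>lborel) \<partial>lborel)"
      by (rule nn_integral_cmult) measurable
    finally show ?thesis .
  qed
  also have "(\<integral>\<^sup>+y. (\<integral>\<^sup>+x. indicator ({c..<d} \<times> {c..<d}) (y, x) * Gq v (y, x) \<partial>lborel) \<partial>lborel)
      = (\<integral>\<^sup>+z. indicator ({c..<d} \<times> {c..<d}) z * Gq v z \<partial>(lborel \<Otimes>\<^sub>M lborel))"
    by (rule lborel.nn_integral_fst[of "\<lambda>z. indicator ({c..<d} \<times> {c..<d}) z * Gq v z" lborel, simplified]) measurable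
  finally show ?thesis unfolding X_def h_def by simp
qed


definition cell :: "real \<Rightarrow> real \<Rightarrow> nat \<Rightarrow> real set" where
  "cell a h k = {a + real k * h ..< a + (real k + 1) * h}"

lemma cell_unique:
  assumes h: "0 < h" and x: "x \<in> cell a h k" "x \<in> cell a h k'"
  shows "k = k'"
proof -
  have "real k * h < (real k' + 1) * h" "real k' * h < (real k + 1) * h"
    using x unfolding cell_def by auto
  then have "real k < real k' + 1" "real k' < real k + 1"
    using h by (simp_all add: mult_less_cancel_right)
  then show ?thesis by linarith
qed

lemma cell_sum:
  assumes h: "0 < h"
  shows "(\<Sum>k<M. indicator (cell a h k) x) = (indicator {a..<a + real M * h} x :: real)"
proof (cases "x \<in> {a..<a + real M * h}")
  case True
  define k0 where "k0 = nat \<lfloor>(x - a) / h\<rfloor>"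
  have q0: "0 \<le> (x - a) / h" and q1: "(x - a) / h < real M" using True h by (auto simp: field_simps)
  have fl: "real k0 \<le> (x - a) / h" "(x - a) / h < real k0 + 1"
    unfolding k0_def using q0 by (auto simp: of_nat_nat)
  have k0M: "k0 < M" using fl q1 by linarith
  have xin: "x \<in> cell a h k0" unfolding cell_def using fl h by (auto simp: field_simps)
  have "(\<Sum>k<M. indicator (cell a h k) x) = indicator (cell a h k0) x + (\<Sum>k\<in>{..<M} - {k0}. indicator (cell a h k) x :: real)"
    using k0M by (subst sum.remove[of _ k0]) auto
  also have "(\<Sum>k\<in>{..<M} - {k0}. indicator (cell a h k) x :: real) = 0"
    using cell_unique[OF h xin] by (intro sum.neutral) (auto simp: indicator_def)
  finally show ?thesis using xin True by simp
next
  case False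
  have "x \<notin> cell a h k" if "k < M" for k
  proof
    assume "x \<in> cell a h k"
    then have "a + real k * h \<le> x" "x < a + (real k + 1) * h" unfolding cell_def by auto
    moreover have "a \<le> a + real k * h" using h by simp
    moreover have "(real k + 1) * h \<le> real M * h" using that h by (intro mult_right_mono) auto
    ultimately show False using False by auto
  qed
  then have "(\<Sum>k<M. indicator (cell a h k) x) = (0::real)" by (intro sum.neutral) (auto simp: indicator_def)
  then show ?thesis using False by simp
qed

lemma cell_sum_le1:
  assumes h: "0 < h"
  shows "(\<Sum>k<M. indicator (cell a h k) x) \<le> (1::real)"
  using cell_sum[OF h] by (simp add: indicator_def)

lemma cells_gagliardo:
  assumes h: "0 < h" and vb[measurable]: "v \<in> borel_measurable borel"
  shows "(\<Sum>k<M. \<integral>\<^sup>+z. indicator (cell a h k \<times> cell a h k) z * Gq v z \<partial>(lborel \<Otimes>\<^sub>M lborel)) \<le> gagliardo v"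
proof -
  have "(\<Sum>k<M. \<integral>\<^sup>+z. indicator (cell a h k \<times> cell a h k) z * Gq v z \<partial>(lborel \<Otimes>\<^sub>M lborel))
      = (\<integral>\<^sup>+z. (\<Sum>k<M. indicator (cell a h k \<times> cell a h k) z * Gq v z) \<partial>(lborel \<Otimes>\<^sub>M lborel))"
    by (rule nn_integral_sum[symmetric]) (simp add: cell_def)
  also have "\<dots> \<le> (\<integral>\<^sup>+z. Gq v z \<partial>(lborel \<Otimes>\<^sub>M lborel))"
  proof (intro nn_integral_mono)
    fix z :: "real \<times> real"
    have s1: "(\<Sum>k<M. indicator (cell a h k \<times> cell a h k) z) \<le> (\<Sum>k<M. indicator (cell a h k) (fst z) :: real)"
      by (intro sum_mono) (auto simp: indicator_def)
    also have "\<dots> \<le> 1" by (rule cell_sum_le1[OF h])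
    finally have s2: "ennreal (\<Sum>k<M. indicator (cell a h k \<times> cell a h k) z) \<le> 1"
      by (simp add: ennreal_leI)
    have "(\<Sum>k<M. indicator (cell a h k \<times> cell a h k) z * Gq v z) = (\<Sum>k<M. ennreal (indicator (cell a h k \<times> cell a h k) z)) * Gq v z"
      by (simp add: sum_distrib_right ennreal_indicator)
    also have "(\<Sum>k<M. ennreal (indicator (cell a h k \<times> cell a h k) z)) = ennreal (\<Sum>k<M. indicator (cell a h k \<times> cell a h k) z)"
      by (rule sum_ennreal) auto
    also have "ennreal (\<Sum>k<M. indicator (cell a h k \<times> cell a h k) z) * Gq v z \<le> 1 * Gq v z"
      by (rule mult_right_mono[OF s2]) simp
    finally show "(\<Sum>k<M. indicator (cell a h k \<times> cell a h k) z * Gq v z) \<le> Gq v z" by simp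
  qed
  finally show ?thesis unfolding gagliardo_Gq .
qed


lemma int_ind_sq:
  assumes v: "v \<in> H12"
  shows "integrable lborel (\<lambda>x. indicator {c..<d} x * (v x - t)\<^sup>2)"
proof -
  have "integrable lborel (\<lambda>x. indicator {c..<d} x * (v x)\<^sup>2 - (2 * t) * (indicator {c..<d} x * v x) + t\<^sup>2 * indicator {c..<d} x)"
    using int_ind_v[OF v] int_ind_v2[OF v]
    by (intro Bochner_Integration.integrable_add Bochner_Integration.integrable_diff integrable_mult_right integrable_real_indicator) auto
  then show ?thesis
    by (rule back_subst[of "integrable lborel"]) (auto simp: indicator_def power2_eq_square algebra_simps fun_eq_iff)
qed

definition cmean :: "real \<Rightarrow> real \<Rightarrow> (real \<Rightarrow> real) \<Rightarrow> nat \<Rightarrow> real" where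
  "cmean a h v k = (\<integral>x. indicator (cell a h k) x * v x \<partial>lborel) / h"

definition cX :: "real \<Rightarrow> real \<Rightarrow> (real \<Rightarrow> real) \<Rightarrow> nat \<Rightarrow> real" where
  "cX a h v k = (\<integral>x. indicator (cell a h k) x * (v x - cmean a h v k)\<^sup>2 \<partial>lborel)"

lemma cX_nonneg: "0 \<le> cX a h v k"
  unfolding cX_def by (intro integral_nonneg_AE) auto

lemma sumX:
  assumes v: "v \<in> H12" and h: "0 < h"
  shows "(\<Sum>k<M. cX a h v k) \<le> h * enn2real (gagliardo v)"
proof -
  have vb[measurable]: "v \<in> borel_measurable borel" using H12D[OF v] by simp
  define I where "I k = (\<integral>\<^sup>+z. indicator (cell a h k \<times> cell a h k) z * Gq v z \<partial>(lborel \<Otimes>\<^sub>M lborel))" for k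
  have cb: "ennreal (h * cX a h v k) \<le> ennreal (h\<^sup>2) * I k" for k
  proof -
    have cd: "a + real k * h < a + (real k + 1) * h" using h by (simp add: algebra_simps)
    have dc: "a + (real k + 1) * h - (a + real k * h) = h" by (simp add: algebra_simps)
    show ?thesis using cell_bound[OF v cd] unfolding dc cX_def cmean_def I_def cell_def .
  qed
  have "ennreal (h * (\<Sum>k<M. cX a h v k)) = (\<Sum>k<M. ennreal (h * cX a h v k))"
    using h cX_nonneg by (simp add: sum_distrib_left)
  also have "\<dots> \<le> (\<Sum>k<M. ennreal (h\<^sup>2) * I k)" by (intro sum_mono cb)
  also have "\<dots> = ennreal (h\<^sup>2) * (\<Sum>k<M. I k)" by (simp add: sum_distrib_left)
  also have "\<dots> \<le> ennreal (h\<^sup>2) * gagliardo v"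
    unfolding I_def by (intro mult_left_mono cells_gagliardo h vb) auto
  also have "\<dots> = ennreal (h\<^sup>2 * enn2real (gagliardo v))"
    using H12D(3)[OF v] by (simp add: ennreal_mult'' ennreal_enn2real_if)
  finally have "h * (\<Sum>k<M. cX a h v k) \<le> h\<^sup>2 * enn2real (gagliardo v)"
    using h by (subst (asm) ennreal_le_iff) (auto simp: enn2real_nonneg)
  then show ?thesis using h by (simp add: power2_eq_square mult.assoc)
qed

lemma sq3: "((p::real) - q)\<^sup>2 \<le> 3 * (p - A)\<^sup>2 + 3 * (A - B)\<^sup>2 + 3 * (q - B)\<^sup>2"
proof -
  have "0 \<le> ((p - A) - (A - B))\<^sup>2 + ((p - A) + (q - B))\<^sup>2 + ((A - B) + (q - B))\<^sup>2" by simp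
  then show ?thesis by (simp add: power2_eq_square algebra_simps)
qed

lemma L2loc:
  assumes v: "v \<in> H12" and u: "u \<in> H12" and h: "0 < h"
  shows "(\<integral>x. indicator {a..<a + real M * h} x * (v x - u x)\<^sup>2 \<partial>lborel)
    \<le> 3 * h * (enn2real (gagliardo v) + enn2real (gagliardo u)) + 3 * h * (\<Sum>k<M. (cmean a h v k - cmean a h u k)\<^sup>2)"
proof -
  have vm[measurable]: "v \<in> borel_measurable lborel" using H12D[OF v] by simp
  have um[measurable]: "u \<in> borel_measurable lborel" using H12D[OF u] by simp
  have ivu: "integrable lborel (\<lambda>x. (v x - u x)\<^sup>2)"
  proof (rule Bochner_Integration.integrable_bound[OF Bochner_Integration.integrable_add[OF integrable_mult_right[OF H12D(2)[OF v], of 2] integrable_mult_right[OF H12D(2)[OF u], of 2]]])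
    show "AE x in lborel. norm ((v x - u x)\<^sup>2) \<le> norm (2 * (v x)\<^sup>2 + 2 * (u x)\<^sup>2)"
    proof (intro AE_I2)
      fix x
      have "0 \<le> (v x + u x)\<^sup>2" by simp
      then have "(v x - u x)\<^sup>2 \<le> 2 * (v x)\<^sup>2 + 2 * (u x)\<^sup>2"
        by (simp add: power2_eq_square algebra_simps)
      moreover have "0 \<le> (v x - u x)\<^sup>2" by simp
      ultimately show "norm ((v x - u x)\<^sup>2) \<le> norm (2 * (v x)\<^sup>2 + 2 * (u x)\<^sup>2)"
        by simp
    qed
  qed measurable
  have ik: "integrable lborel (\<lambda>x. indicator (cell a h k) x * (v x - u x)\<^sup>2)" for k
    by (rule Bochner_Integration.integrable_bound[OF ivu]) (auto simp: indicator_def cell_def)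
  have cellm: "measure lborel (cell a h k) = h" for k
    using h unfolding cell_def by (simp add: algebra_simps)
  have "(\<integral>x. indicator {a..<a + real M * h} x * (v x - u x)\<^sup>2 \<partial>lborel)
      = (\<integral>x. (\<Sum>k<M. indicator (cell a h k) x * (v x - u x)\<^sup>2) \<partial>lborel)"
    by (simp add: cell_sum[OF h, symmetric] sum_distrib_right)
  also have "\<dots> = (\<Sum>k<M. \<integral>x. indicator (cell a h k) x * (v x - u x)\<^sup>2 \<partial>lborel)"
    by (rule Bochner_Integration.integral_sum) (use ik in auto)
  also have "\<dots> \<le> (\<Sum>k<M. 3 * cX a h v k + 3 * h * (cmean a h v k - cmean a h u k)\<^sup>2 + 3 * cX a h u k)"
  proof (intro sum_mono)
    fix k
    define A where "A = cmean a h v k"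
    define B where "B = cmean a h u k"
    have i1: "integrable lborel (\<lambda>x. indicator (cell a h k) x * (v x - A)\<^sup>2)" unfolding cell_def by (rule int_ind_sq[OF v])
    have i2: "integrable lborel (\<lambda>x. indicator (cell a h k) x * (u x - B)\<^sup>2)" unfolding cell_def by (rule int_ind_sq[OF u])
    have i3: "integrable lborel (\<lambda>x. indicator (cell a h k) x :: real)" by (auto simp: cell_def)
    have "(\<integral>x. indicator (cell a h k) x * (v x - u x)\<^sup>2 \<partial>lborel)
        \<le> (\<integral>x. 3 * (indicator (cell a h k) x * (v x - A)\<^sup>2) + (3 * (A - B)\<^sup>2) * indicator (cell a h k) x
              + 3 * (indicator (cell a h k) x * (u x - B)\<^sup>2) \<partial>lborel)"
    proof (rule integral_mono[OF ik])
      show "integrable lborel (\<lambda>x. 3 * (indicator (cell a h k) x * (v x - A)\<^sup>2) + (3 * (A - B)\<^sup>2) * indicator (cell a h k) x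
              + 3 * (indicator (cell a h k) x * (u x - B)\<^sup>2))"
        using i1 i2 i3 by auto
      fix x
      show "indicator (cell a h k) x * (v x - u x)\<^sup>2 \<le> 3 * (indicator (cell a h k) x * (v x - A)\<^sup>2) + (3 * (A - B)\<^sup>2) * indicator (cell a h k) x
              + 3 * (indicator (cell a h k) x * (u x - B)\<^sup>2)"
        using sq3[of "v x" "u x" A B] by (auto simp: indicator_def)
    qed
    also have "\<dots> = 3 * cX a h v k + 3 * h * (A - B)\<^sup>2 + 3 * cX a h u k"
      using i1 i2 i3 cellm[of k] unfolding cX_def A_def B_def
      by (simp add: Bochner_Integration.integral_add)
    finally show "(\<integral>x. indicator (cell a h k) x * (v x - u x)\<^sup>2 \<partial>lborel)
        \<le> 3 * cX a h v k + 3 * h * (cmean a h v k - cmean a h u k)\<^sup>2 + 3 * cX a h u k"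
      unfolding A_def B_def .
  qed
  also have "\<dots> = 3 * (\<Sum>k<M. cX a h v k) + 3 * h * (\<Sum>k<M. (cmean a h v k - cmean a h u k)\<^sup>2) + 3 * (\<Sum>k<M. cX a h u k)"
    by (simp add: sum.distrib sum_distrib_left)
  also have "\<dots> \<le> 3 * (h * enn2real (gagliardo v)) + 3 * h * (\<Sum>k<M. (cmean a h v k - cmean a h u k)\<^sup>2) + 3 * (h * enn2real (gagliardo u))"
    using sumX[OF v h, of a M] sumX[OF u h, of a M] by simp
  finally show ?thesis by (simp add: algebra_simps)
qed


lemma gr_le_norm: assumes v: "v \<in> H12" and b: "H12_norm v \<le> \<rho>"
  shows "enn2real (gagliardo v) \<le> \<rho>\<^sup>2"
proof -
  have "0 \<le> H12_norm v" unfolding H12_norm_def by simp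
  then have "(H12_norm v)\<^sup>2 \<le> \<rho>\<^sup>2" using b by (intro power_mono) auto
  moreover have "0 \<le> (\<integral>x. (v x)\<^sup>2 \<partial>lborel)" by simp
  ultimately show ?thesis using H12_norm_sq[OF v] by linarith
qed

lemma loc_conv:
  assumes wc: "H12_weak_conv un u" and bnd: "\<And>n. H12_norm (un n) \<le> \<rho>" and R: "0 < R"
  shows "(\<lambda>n. \<integral>x. indicator {-R..<R} x * (un n x - u x)\<^sup>2 \<partial>lborel) \<longlonglongrightarrow> 0"
proof (rule LIMSEQ_I)
  fix e :: real assume e: "0 < e"
  have un: "un n \<in> H12" for n using wc unfolding H12_weak_conv_def by auto
  have u: "u \<in> H12" and L: "\<And>L. L \<in> H12_dual \<Longrightarrow> (\<lambda>n. L (un n)) \<longlonglongrightarrow> L u"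
    using wc unfolding H12_weak_conv_def by auto
  define G where "G = \<rho>\<^sup>2 + enn2real (gagliardo u)"
  have G0: "0 \<le> G" unfolding G_def by (simp add: enn2real_nonneg)
  obtain n0 where n0: "12 * R * G / e < real n0" using reals_Archimedean2 by blast
  define M where "M = Suc n0"
  define h where "h = 2 * R / real M"
  have h0: "0 < h" unfolding h_def M_def using R by simp
  have aM: "- R + real M * h = R" unfolding h_def M_def by simp
  have hG: "3 * h * G < e / 2"
  proof -
    have "12 * R * G / e < real M" using n0 unfolding M_def by simp
    then have "12 * R * G < real M * e" using e by (simp add: divide_less_eq)
    then show ?thesis unfolding h_def M_def using e by (simp add: field_simps)
  qed
  have cm: "(\<lambda>n. cmean (-R) h (un n) k) \<longlonglongrightarrow> cmean (-R) h u k" for k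
  proof -
    have "(\<lambda>v. \<integral>x. indicator (cell (-R) h k) x * v x \<partial>lborel) \<in> H12_dual"
      unfolding cell_def using h0 by (intro L_dual) (simp add: algebra_simps)
    from L[OF this] show ?thesis unfolding cmean_def using h0 by (intro tendsto_divide) auto
  qed
  have "(\<lambda>n. \<Sum>k<M. (cmean (-R) h (un n) k - cmean (-R) h u k)\<^sup>2) \<longlonglongrightarrow> (\<Sum>k<M. (cmean (-R) h u k - cmean (-R) h u k)\<^sup>2)"
    by (intro tendsto_intros cm)
  then have "(\<lambda>n. \<Sum>k<M. (cmean (-R) h (un n) k - cmean (-R) h u k)\<^sup>2) \<longlonglongrightarrow> 0" by simp
  then have "eventually (\<lambda>n. (\<Sum>k<M. (cmean (-R) h (un n) k - cmean (-R) h u k)\<^sup>2) < e / (6 * h)) sequentially"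
    using e h0 by (intro order_tendstoD(2)) auto
  then obtain N where N: "\<And>n. n \<ge> N \<Longrightarrow> (\<Sum>k<M. (cmean (-R) h (un n) k - cmean (-R) h u k)\<^sup>2) < e / (6 * h)"
    unfolding eventually_sequentially by blast
  have "norm ((\<integral>x. indicator {-R..<R} x * (un n x - u x)\<^sup>2 \<partial>lborel) - 0) < e" if n: "n \<ge> N" for n
  proof -
    have I0: "0 \<le> (\<integral>x. indicator {-R..<R} x * (un n x - u x)\<^sup>2 \<partial>lborel)"
      by (intro integral_nonneg_AE) auto
    have "(\<integral>x. indicator {-R..<R} x * (un n x - u x)\<^sup>2 \<partial>lborel)
       \<le> 3 * h * (enn2real (gagliardo (un n)) + enn2real (gagliardo u)) + 3 * h * (\<Sum>k<M. (cmean (-R) h (un n) k - cmean (-R) h u k)\<^sup>2)"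
      using L2loc[OF un u h0, of "-R" M] unfolding aM .
    also have "\<dots> \<le> 3 * h * G + 3 * h * (e / (6 * h))"
      using gr_le_norm[OF un bnd] N[OF n] h0 unfolding G_def
      by (intro add_mono mult_left_mono) auto
    also have "\<dots> < e" using hG h0 by simp
    finally show ?thesis using I0 by simp
  qed
  then show "\<exists>no. \<forall>n\<ge>no. norm ((\<integral>x. indicator {-R..<R} x * (un n x - u x)\<^sup>2 \<partial>lborel) - 0) < e" by blast
qed

lemma std_le1: "std_normal_density x \<le> 1"
proof -
  have "exp (- x\<^sup>2 / 2) \<le> 1" by simp
  moreover have "1 / sqrt (2 * pi) \<le> 1" using pi_gt3 by (simp add: divide_le_eq)
  ultimately show ?thesis unfolding std_normal_density_def
    by (metis mult_le_one exp_ge_zero div_0 divide_nonneg_pos real_sqrt_ge_zero zero_le_one dual_order.trans le_less)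
qed

lemma tail_lim: "(\<lambda>k::nat. \<integral>x. std_normal_density x * indicator (- {- real k..<real k}) x \<partial>lborel) \<longlonglongrightarrow> 0"
proof -
  have zm: "(\<lambda>x::real. 0::real) \<in> borel_measurable lborel" by simp
  have sm: "(\<lambda>x. std_normal_density x * indicator (- {- real k..<real k}) x) \<in> borel_measurable lborel" for k
    by measurable
  have ae: "AE x in lborel. (\<lambda>k. std_normal_density x * indicator (- {- real k..<real k}) x) \<longlonglongrightarrow> 0"
  proof (intro AE_I2)
    fix x :: real
    obtain N where N: "\<bar>x\<bar> < real N" using reals_Archimedean2 by blast
    have "eventually (\<lambda>k. std_normal_density x * indicator (- {- real k..<real k}) x = 0) sequentially"
      unfolding eventually_sequentially
    proof (intro exI allI impI)
      fix k assume "N \<le> k"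
      then have "real N \<le> real k" by simp
      then have "x \<in> {- real k..<real k}" using N by auto
      then show "std_normal_density x * indicator (- {- real k..<real k}) x = 0" by simp
    qed
    then show "(\<lambda>k. std_normal_density x * indicator (- {- real k..<real k}) x) \<longlonglongrightarrow> 0"
      by (rule tendsto_eventually)
  qed
  have bd: "AE x in lborel. norm (std_normal_density x * indicator (- {- real k..<real k}) x) \<le> std_normal_density x" for k
    by (intro AE_I2) (auto simp: indicator_def)
  show ?thesis
    using integral_dominated_convergence[OF zm sm integrable_normal_density ae bd] by simp
qed

lemma ae_subseq:
  assumes wc: "H12_weak_conv un u" and bnd: "\<And>n. H12_norm (un n) \<le> \<rho>"
  shows "\<exists>r. strict_mono r \<and> (AE x in lborel. (\<lambda>n. un (r n) x) \<longlonglongrightarrow> u x)"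
proof -
  have un: "un n \<in> H12" for n using wc unfolding H12_weak_conv_def by auto
  have u: "u \<in> H12" using wc unfolding H12_weak_conv_def by auto
  have unm[measurable]: "un n \<in> borel_measurable lborel" for n using H12D[OF un] by simp
  have um[measurable]: "u \<in> borel_measurable lborel" using H12D[OF u] by simp
  define D where "D n x = std_normal_density x * min 1 ((un n x - u x)\<^sup>2)" for n x
  have Dm[measurable]: "D n \<in> borel_measurable lborel" for n unfolding D_def by measurable
  have D0: "0 \<le> D n x" for n x unfolding D_def by simp
  have Di: "integrable lborel (D n)" for n
  proof (rule Bochner_Integration.integrable_bound[OF integrable_normal_density[where \<mu>=0 and \<sigma>=1]])
    show "AE x in lborel. norm (D n x) \<le> norm (std_normal_density x)"
    proof (intro AE_I2)
      fix x
      have "D n x \<le> std_normal_density x * 1" unfolding D_def by (intro mult_left_mono) auto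
      then show "norm (D n x) \<le> norm (std_normal_density x)" using D0[of n x] by simp
    qed
  qed (auto intro: Dm)
  have lim: "(\<lambda>n. \<integral>x. norm (D n x) \<partial>lborel) \<longlonglongrightarrow> 0"
  proof (rule LIMSEQ_I)
    fix e :: real assume e: "0 < e"
    have "eventually (\<lambda>k. (\<integral>x. std_normal_density x * indicator (- {- real k..<real k}) x \<partial>lborel) < e / 2) sequentially"
      using e by (intro order_tendstoD(2)[OF tail_lim]) auto
    then obtain K0 where K0: "\<And>k. k \<ge> K0 \<Longrightarrow> (\<integral>x. std_normal_density x * indicator (- {- real k..<real k}) x \<partial>lborel) < e / 2"
      unfolding eventually_sequentially by blast
    define K where "K = Suc K0"
    have T: "(\<integral>x. std_normal_density x * indicator (- {- real K..<real K}) x \<partial>lborel) < e / 2"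
      using K0[of K] unfolding K_def by simp
    have "(\<lambda>n. \<integral>x. indicator {- real K..<real K} x * (un n x - u x)\<^sup>2 \<partial>lborel) \<longlonglongrightarrow> 0"
      using loc_conv[OF wc bnd, of "real K"] unfolding K_def by simp
    then have "eventually (\<lambda>n. (\<integral>x. indicator {- real K..<real K} x * (un n x - u x)\<^sup>2 \<partial>lborel) < e / 2) sequentially"
      using e by (intro order_tendstoD(2)) auto
    then obtain N where N: "\<And>n. n \<ge> N \<Longrightarrow> (\<integral>x. indicator {- real K..<real K} x * (un n x - u x)\<^sup>2 \<partial>lborel) < e / 2"
      unfolding eventually_sequentially by blast
    have "norm ((\<integral>x. norm (D n x) \<partial>lborel) - 0) < e" if n: "n \<ge> N" for n
    proof -
      have i1: "integrable lborel (\<lambda>x. indicator {- real K..<real K} x * (un n x - u x)\<^sup>2)"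
      proof -
        have "integrable lborel (\<lambda>x. 2 * (indicator {- real K..<real K} x * (un n x)\<^sup>2) + 2 * (indicator {- real K..<real K} x * (u x)\<^sup>2))"
          using int_ind_v2[OF un] int_ind_v2[OF u] by auto
        moreover have "norm (indicator {- real K..<real K} x * (un n x - u x)\<^sup>2)
           \<le> norm (2 * (indicator {- real K..<real K} x * (un n x)\<^sup>2) + 2 * (indicator {- real K..<real K} x * (u x)\<^sup>2))" for x
        proof -
          have "0 \<le> (un n x + u x)\<^sup>2" by simp
          then have "(un n x - u x)\<^sup>2 \<le> 2 * (un n x)\<^sup>2 + 2 * (u x)\<^sup>2" by (simp add: power2_eq_square algebra_simps)
          then show ?thesis by (auto simp: indicator_def)
        qed
        moreover have "(\<lambda>x. indicator {- real K..<real K} x * (un n x - u x)\<^sup>2) \<in> borel_measurable lborel"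
          by measurable
        ultimately show ?thesis
          using Bochner_Integration.integrable_bound by blast
      qed
      have i2: "integrable lborel (\<lambda>x. std_normal_density x * indicator (- {- real K..<real K}) x)"
      proof (rule Bochner_Integration.integrable_bound[OF integrable_normal_density[where \<mu>=0 and \<sigma>=1]])
        show "(\<lambda>x. std_normal_density x * indicator (- {- real K..<real K}) x) \<in> borel_measurable lborel"
          by measurable
        show "AE x in lborel. norm (std_normal_density x * indicator (- {- real K..<real K}) x) \<le> norm (std_normal_density x)"
          by (intro AE_I2) (simp add: indicator_def)
      qed simp
      have "(\<integral>x. norm (D n x) \<partial>lborel) \<le> (\<integral>x. indicator {- real K..<real K} x * (un n x - u x)\<^sup>2
            + std_normal_density x * indicator (- {- real K..<real K}) x \<partial>lborel)"
      proof (rule integral_mono)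
        show "integrable lborel (\<lambda>x. norm (D n x))" using Di by auto
        show "integrable lborel (\<lambda>x. indicator {- real K..<real K} x * (un n x - u x)\<^sup>2
            + std_normal_density x * indicator (- {- real K..<real K}) x)" using i1 i2 by auto
        fix x
        show "norm (D n x) \<le> indicator {- real K..<real K} x * (un n x - u x)\<^sup>2
            + std_normal_density x * indicator (- {- real K..<real K}) x"
        proof (cases "x \<in> {- real K..<real K}")
          case True
          have "D n x \<le> 1 * (un n x - u x)\<^sup>2" unfolding D_def
            by (intro mult_mono std_le1) auto
          then show ?thesis using True D0[of n x] by simp
        next
          case False
          have "D n x \<le> std_normal_density x * 1" unfolding D_def by (intro mult_left_mono) auto
          then show ?thesis using False D0[of n x] by simp
        qed
      qed
      also have "\<dots> < e / 2 + e / 2" using N[OF n] T i1 i2 by simp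
      finally show ?thesis by simp
    qed
    then show "\<exists>no. \<forall>n\<ge>no. norm ((\<integral>x. norm (D n x) \<partial>lborel) - 0) < e" by blast
  qed
  obtain r where r: "strict_mono r" "AE x in lborel. (\<lambda>n. D (r n) x) \<longlonglongrightarrow> 0"
    using tendsto_L1_AE_subseq[OF Di lim] by blast
  have "AE x in lborel. (\<lambda>n. un (r n) x) \<longlonglongrightarrow> u x" using r(2)
  proof eventually_elim
    case (elim x)
    have p: "std_normal_density x > 0" by (rule normal_density_pos) simp
    have "(\<lambda>n. D (r n) x / std_normal_density x) \<longlonglongrightarrow> 0 / std_normal_density x"
      by (intro tendsto_divide elim) (use p in auto)
    then have m: "(\<lambda>n. min 1 ((un (r n) x - u x)\<^sup>2)) \<longlonglongrightarrow> 0" using p unfolding D_def by simp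
    then have "eventually (\<lambda>n. min 1 ((un (r n) x - u x)\<^sup>2) < 1) sequentially"
      by (intro order_tendstoD(2)) auto
    then have "eventually (\<lambda>n. min 1 ((un (r n) x - u x)\<^sup>2) = (un (r n) x - u x)\<^sup>2) sequentially"
      by eventually_elim (auto simp: min_def)
    then have "(\<lambda>n. (un (r n) x - u x)\<^sup>2) \<longlonglongrightarrow> 0" using m by (rule Lim_transform_eventually[rotated]) 
    then have "(\<lambda>n. sqrt ((un (r n) x - u x)\<^sup>2)) \<longlonglongrightarrow> sqrt 0" by (intro tendsto_intros)
    then have "(\<lambda>n. \<bar>un (r n) x - u x\<bar>) \<longlonglongrightarrow> 0" by simp
    then have "(\<lambda>n. un (r n) x - u x) \<longlonglongrightarrow> 0" by (simp add: tendsto_rabs_zero_iff)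
    then show ?case by (simp add: LIM_zero_iff)
  qed
  then show ?thesis using r(1) by blast
qed


lemma gagliardo_scale:
  assumes wb[measurable]: "w \<in> borel_measurable borel" and r: "0 < \<rho>"
  shows "gagliardo (\<lambda>x. w x / \<rho>) = ennreal (1 / \<rho>\<^sup>2) * gagliardo w"
proof -
  have "gagliardo (\<lambda>x. w x / \<rho>) = (\<integral>\<^sup>+z. ennreal (1 / \<rho>\<^sup>2) * Gq w z \<partial>(lborel \<Otimes>\<^sub>M lborel))"
    unfolding gagliardo_Gq
  proof (intro nn_integral_cong)
    fix z :: "real \<times> real"
    have "((w (fst z) / \<rho> - w (snd z) / \<rho>)\<^sup>2 / (fst z - snd z)\<^sup>2) = (1 / \<rho>\<^sup>2) * ((w (fst z) - w (snd z))\<^sup>2 / (fst z - snd z)\<^sup>2)"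
      using r by (simp add: field_simps power2_eq_square)
    moreover have "ennreal ((1 / \<rho>\<^sup>2) * ((w (fst z) - w (snd z))\<^sup>2 / (fst z - snd z)\<^sup>2))
        = ennreal (1 / \<rho>\<^sup>2) * ennreal ((w (fst z) - w (snd z))\<^sup>2 / (fst z - snd z)\<^sup>2)"
      by (rule ennreal_mult) auto
    ultimately show "Gq (\<lambda>x. w x / \<rho>) z = ennreal (1 / \<rho>\<^sup>2) * Gq w z"
      unfolding Gq_def by simp
  qed
  also have "\<dots> = ennreal (1 / \<rho>\<^sup>2) * gagliardo w"
    unfolding gagliardo_Gq by (rule nn_integral_cmult) measurable
  finally show ?thesis .
qed

lemma oz_bound:
  assumes oz: "\<forall>u\<in>H12. enn2real (gagliardo u) / (2 * pi) \<le> 1 \<longrightarrow>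
        (\<integral>\<^sup>+ x. ennreal (exp (\<alpha> * (u x)^2) - 1) \<partial>lborel) \<le> ennreal (H * (\<integral>x. (u x)^2 \<partial>lborel))"
    and H: "0 < H" and r: "0 < \<rho>" and w: "w \<in> H12" and wn: "H12_norm w < \<rho>"
    and k: "k * \<rho>\<^sup>2 = \<alpha>"
  shows "(\<integral>\<^sup>+x. ennreal (EE k (w x)) \<partial>lborel) \<le> ennreal H"
proof -
  have wb[measurable]: "w \<in> borel_measurable borel" using H12D[OF w] by simp
  define v where "v x = w x / \<rho>" for x
  have gv: "gagliardo v = ennreal (1 / \<rho>\<^sup>2) * gagliardo w" unfolding v_def by (rule gagliardo_scale[OF wb r])
  have iv: "integrable lborel (\<lambda>x. (v x)\<^sup>2)"
    using H12D(2)[OF w] unfolding v_def by (simp add: power_divide)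
  have Iv: "(\<integral>x. (v x)\<^sup>2 \<partial>lborel) = (\<integral>x. (w x)\<^sup>2 \<partial>lborel) / \<rho>\<^sup>2"
    unfolding v_def by (simp add: power_divide)
  have vb: "v \<in> borel_measurable borel" unfolding v_def by measurable
  have vH: "v \<in> H12" unfolding H12_def
    using iv gv H12D(3)[OF w] vb by (auto simp: ennreal_mult_less_top)
  have grv: "enn2real (gagliardo v) = enn2real (gagliardo w) / \<rho>\<^sup>2"
    unfolding gv by (simp add: enn2real_mult)
  have nw: "(\<integral>x. (w x)\<^sup>2 \<partial>lborel) + enn2real (gagliardo w) < \<rho>\<^sup>2"
  proof -
    have "0 \<le> H12_norm w" unfolding H12_norm_def by simp
    then have "(H12_norm w)\<^sup>2 < \<rho>\<^sup>2" using wn by (intro power_strict_mono) auto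
    then show ?thesis using H12_norm_sq[OF w] by simp
  qed
  have nv: "(\<integral>x. (v x)\<^sup>2 \<partial>lborel) + enn2real (gagliardo v) < 1"
    using nw r unfolding Iv grv by (simp add: field_simps)
  have "enn2real (gagliardo v) / (2 * pi) \<le> 1"
  proof -
    have "enn2real (gagliardo v) \<le> 1" using nv by (smt (verit) integral_nonneg_AE AE_I2 zero_le_power2)
    also have "1 \<le> 2 * pi" using pi_gt3 by simp
    finally show ?thesis by simp
  qed
  then have "(\<integral>\<^sup>+ x. ennreal (exp (\<alpha> * (v x)^2) - 1) \<partial>lborel) \<le> ennreal (H * (\<integral>x. (v x)^2 \<partial>lborel))"
    using oz vH by blast
  also have "\<dots> \<le> ennreal H"
  proof -
    have "(\<integral>x. (v x)\<^sup>2 \<partial>lborel) \<le> 1" using nv enn2real_nonneg[of "gagliardo v"] by linarith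
    then show ?thesis using H by (intro ennreal_leI) (simp add: mult_left_le)
  qed
  also have "(\<integral>\<^sup>+ x. ennreal (exp (\<alpha> * (v x)^2) - 1) \<partial>lborel) = (\<integral>\<^sup>+x. ennreal (EE k (w x)) \<partial>lborel)"
  proof (intro nn_integral_cong)
    fix x
    have "\<alpha> * (v x)^2 = k * (w x)\<^sup>2" unfolding v_def k[symmetric] using r by (simp add: field_simps)
    then show "ennreal (exp (\<alpha> * (v x)^2) - 1) = ennreal (EE k (w x))" unfolding EE_def by simp
  qed
  finally show ?thesis .
qed

lemma subseq_arg:
  fixes X :: "nat \<Rightarrow> real"
  assumes hyp: "\<And>r::nat\<Rightarrow>nat. strict_mono r \<Longrightarrow> \<exists>r'::nat\<Rightarrow>nat. strict_mono r' \<and> (\<lambda>n. X (r (r' n))) \<longlonglongrightarrow> 0"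
  shows "X \<longlonglongrightarrow> 0"
proof (rule ccontr)
  assume "\<not> X \<longlonglongrightarrow> 0"
  then obtain e where e: "0 < e" "\<not> eventually (\<lambda>n. dist (X n) 0 < e) sequentially"
    unfolding tendsto_iff by auto
  obtain r :: "nat \<Rightarrow> nat" where r: "strict_mono r" "\<forall>n. \<not> dist (X (r n)) 0 < e"
    using not_eventually_sequentiallyD[OF e(2)] by metis
  obtain r' where r': "strict_mono r'" "(\<lambda>n. X (r (r' n))) \<longlonglongrightarrow> 0" using hyp[OF r(1)] by auto
  have "eventually (\<lambda>n. dist (X (r (r' n))) 0 < e) sequentially"
    using r'(2) e(1) unfolding tendsto_iff by auto
  then obtain n where "dist (X (r (r' n))) 0 < e" by (auto simp: eventually_sequentially)
  then show False using r(2) by blast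
qed

lemma weak_conv_subseq:
  assumes "H12_weak_conv un u" "strict_mono r"
  shows "H12_weak_conv (\<lambda>n. un (r n)) u"
  using assms unfolding H12_weak_conv_def
  by (auto intro: LIMSEQ_subseq_LIMSEQ[unfolded comp_def])


theorem lemma2p6:
  fixes f :: "real \<Rightarrow> real" and \<omega> \<alpha>0 :: real
  assumes omega: "ozawa_const \<omega>"
    and alpha0: "0 < \<alpha>0" "\<alpha>0 < \<omega>"
    and growth_f: "critical_growth \<alpha>0 f"
    and growth_df: "critical_growth \<alpha>0 (\<lambda>s. deriv f s * s)"
    and f1_C1: "\<forall>s. f differentiable (at s)" "continuous_on UNIV (deriv f)"
    and f1_odd: "\<forall>s. f (- s) = - f s"
    and f1_convex: "convex_on {0..} f"
    and f1_lim: "((\<lambda>s. f s / s) \<longlongrightarrow> 0) (at 0)"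
    and f2: "strict_mono_on {0<..} (\<lambda>s. f s / s)"
    and f3: "\<exists>q C. q > 2 \<and> C > 0 \<and> (\<forall>s. prim f s \<ge> C * \<bar>s\<bar> powr q)"
    and AR: "\<exists>\<theta>>2. \<forall>s. \<theta> * prim f s \<le> s * f s"
  shows "\<exists>\<rho>0>0. \<forall>un u. H12_weak_conv un u \<and> (\<forall>n. H12_norm (un n) < \<rho>0) \<longrightarrow>
     ((\<lambda>n. (\<integral>x. f (un n x) * un n x \<partial>lborel)
            - (\<integral>x. f (un n x - u x) * (un n x - u x) \<partial>lborel)
            - (\<integral>x. f (u x) * u x \<partial>lborel)) \<longlonglongrightarrow> 0) \<and>
     ((\<lambda>n. (\<integral>x. prim f (un n x) \<partial>lborel)
            - (\<integral>x. prim f (un n x - u x) \<partial>lborel)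
            - (\<integral>x. prim f (u x) \<partial>lborel)) \<longlonglongrightarrow> 0)"
proof -
  interpret F: fctx f \<alpha>0
    using alpha0 growth_f growth_df f1_C1 f1_odd f1_convex f1_lim f2 by unfold_locales auto
  define \<alpha> where "\<alpha> = \<omega> / 2"
  have \<alpha>: "0 < \<alpha>" "\<alpha> < \<omega>" using omega by (auto simp: ozawa_const_def \<alpha>_def)
  obtain H where H: "H > 0" "\<forall>u\<in>H12. enn2real (gagliardo u) / (2 * pi) \<le> 1 \<longrightarrow>
        (\<integral>\<^sup>+ x. ennreal (exp (\<alpha> * (u x)^2) - 1) \<partial>lborel) \<le> ennreal (H * (\<integral>x. (u x)^2 \<partial>lborel))"
    using omega \<alpha> unfolding ozawa_const_def by blast
  define k where "k = 4 * F.\<kappa>"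
  have k: "0 < k" using F.kpos by (simp add: k_def)
  define \<rho>0 where "\<rho>0 = sqrt (\<alpha> / k)"
  have \<rho>0: "0 < \<rho>0" unfolding \<rho>0_def using k \<alpha> by simp
  have kr: "k * \<rho>0\<^sup>2 = \<alpha>" unfolding \<rho>0_def using k \<alpha> by simp
  show ?thesis
  proof (intro exI[of _ \<rho>0] conjI allI impI \<rho>0)
    fix un u assume A: "H12_weak_conv un u \<and> (\<forall>n. H12_norm (un n) < \<rho>0)"
    have wc: "H12_weak_conv un u" and nb: "\<And>n. H12_norm (un n) < \<rho>0" using A by auto
    have un: "un n \<in> H12" for n using wc unfolding H12_weak_conv_def by auto
    have u: "u \<in> H12" using wc unfolding H12_weak_conv_def by auto
    have unm: "un n \<in> borel_measurable lborel" for n using H12D[OF un] by simp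
    have um: "u \<in> borel_measurable lborel" using H12D[OF u] by simp
    have bnd: "(\<integral>\<^sup>+x. ennreal (EE (4 * F.\<kappa>) (un n x)) \<partial>lborel) \<le> ennreal H" for n
      using oz_bound[OF H(2) H(1) \<rho>0 un nb kr] unfolding k_def .
    have key: "\<exists>r'::nat\<Rightarrow>nat. strict_mono r' \<and> (AE x in lborel. (\<lambda>n. un (r (r' n)) x) \<longlonglongrightarrow> u x)"
      if r: "strict_mono (r::nat\<Rightarrow>nat)" for r
    proof -
      have "H12_weak_conv (\<lambda>n. un (r n)) u" by (rule weak_conv_subseq[OF wc r])
      from ae_subseq[OF this, of \<rho>0] nb show ?thesis by (auto intro: less_imp_le)
    qed
    have gen: "(\<lambda>n. (\<integral>x. j (un n x) \<partial>lborel) - (\<integral>x. j (un n x - u x) \<partial>lborel) - (\<integral>x. j (u x) \<partial>lborel)) \<longlonglongrightarrow> 0"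
      if jc: "continuous_on UNIV j" and j0: "j 0 = 0"
        and jd: "\<And>\<epsilon>. 0 < \<epsilon> \<Longrightarrow> \<exists>C. \<forall>a b. \<bar>j (a+b) - j a\<bar> \<le> \<epsilon> * EE F.\<kappa> a + C * EE F.\<kappa> b" for j
    proof (rule subseq_arg)
      fix r :: "nat \<Rightarrow> nat" assume r: "strict_mono r"
      obtain r' :: "nat \<Rightarrow> nat" where r': "strict_mono r'" "AE x in lborel. (\<lambda>n. un (r (r' n)) x) \<longlonglongrightarrow> u x"
        using key[OF r] by blast
      have "(\<lambda>n. (\<integral>x. j (un (r (r' n)) x) \<partial>lborel) - (\<integral>x. j (un (r (r' n)) x - u x) \<partial>lborel) - (\<integral>x. j (u x) \<partial>lborel)) \<longlonglongrightarrow> 0"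
        by (rule BL_core[OF jc j0 jd F.kpos unm um bnd _ r'(2)]) (use H(1) in auto)
      then show "\<exists>r'::nat\<Rightarrow>nat. strict_mono r' \<and>
          (\<lambda>n. (\<integral>x. j (un (r (r' n)) x) \<partial>lborel) - (\<integral>x. j (un (r (r' n)) x - u x) \<partial>lborel) - (\<integral>x. j (u x) \<partial>lborel)) \<longlonglongrightarrow> 0"
        using r'(1) by blast
    qed
    show "(\<lambda>n. (\<integral>x. f (un n x) * un n x \<partial>lborel)
            - (\<integral>x. f (un n x - u x) * (un n x - u x) \<partial>lborel)
            - (\<integral>x. f (u x) * u x \<partial>lborel)) \<longlonglongrightarrow> 0"
      using gen[of "\<lambda>s. f s * s", OF F.J1_cont F.J1_0 F.J1_diff] by simp
    show "(\<lambda>n. (\<integral>x. prim f (un n x) \<partial>lborel)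
            - (\<integral>x. prim f (un n x - u x) \<partial>lborel)
            - (\<integral>x. prim f (u x) \<partial>lborel)) \<longlonglongrightarrow> 0"
      using gen[of "prim f", OF F.J2_cont F.J2_0 F.J2_diff] by simp
  qed
qed


end
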